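(* Let $G$ be a connected locally finite quasi-transitive graph with exactly $2$ ends. Then $G$ has a periodic proper vertex-coloring with $\chi(G)$ colors.
   Context: A graph is locally finite if every vertex has finite degree. A graph $G$ is quasi-transitive if $V(G)$ has finitely many orbits under the action of its automorphism group $\mathrm{Aut}(G)$. A ray is an infinite one-way path; two rays are equivalent if there are infinitely many disjoint paths between them, and an end is an equivalence class of rays. $\chi(G)$ denotes the chromatic number (minimum number of colors in a proper vertex-coloring). A vertex-coloring of $G$ is periodic if the subgroup of automorphisms of $G$ mapping every vertex to a vertex of the same color acts quasi-transitively on $V(G)$, i.e. $V(G)$ has finitely many orbits under this subgroup. *)

theory Defs
  imports Main
begin

text \<open>A (simple, undirected) graph on vertex type 'a: the vertex set is UNIV,
  adjacency is a symmetric irreflexive relation E.\<close>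

definition simple_graph :: "('a \<Rightarrow> 'a \<Rightarrow> bool) \<Rightarrow> bool" where
  "simple_graph E \<longleftrightarrow> (\<forall>u v. E u v \<longrightarrow> E v u) \<and> (\<forall>v. \<not> E v v)"

definition locally_finite :: "('a \<Rightarrow> 'a \<Rightarrow> bool) \<Rightarrow> bool" where
  "locally_finite E \<longleftrightarrow> (\<forall>v. finite {u. E v u})"

definition connected_graph :: "('a \<Rightarrow> 'a \<Rightarrow> bool) \<Rightarrow> bool" where
  "connected_graph E \<longleftrightarrow> (\<forall>u v. E\<^sup>*\<^sup>* u v)"

definition automorphisms :: "('a \<Rightarrow> 'a \<Rightarrow> bool) \<Rightarrow> ('a \<Rightarrow> 'a) set" where
  "automorphisms E = {f. bij f \<and> (\<forall>u v. E u v \<longleftrightarrow> E (f u) (f v))}"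

definition finitely_many_orbits :: "('a \<Rightarrow> 'a) set \<Rightarrow> bool" where
  "finitely_many_orbits H \<longleftrightarrow> finite ((\<lambda>v. {h v | h. h \<in> H}) ` UNIV)"

definition quasi_transitive :: "('a \<Rightarrow> 'a \<Rightarrow> bool) \<Rightarrow> bool" where
  "quasi_transitive E \<longleftrightarrow> finitely_many_orbits (automorphisms E)"

definition is_ray :: "('a \<Rightarrow> 'a \<Rightarrow> bool) \<Rightarrow> (nat \<Rightarrow> 'a) \<Rightarrow> bool" where
  "is_ray E r \<longleftrightarrow> inj r \<and> (\<forall>n. E (r n) (r (Suc n)))"

definition is_path :: "('a \<Rightarrow> 'a \<Rightarrow> bool) \<Rightarrow> 'a list \<Rightarrow> bool" where
  "is_path E p \<longleftrightarrow> p \<noteq> [] \<and> distinct p \<and> (\<forall>i. Suc i < length p \<longrightarrow> E (p ! i) (p ! Suc i))"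

definition equiv_rays :: "('a \<Rightarrow> 'a \<Rightarrow> bool) \<Rightarrow> (nat \<Rightarrow> 'a) \<Rightarrow> (nat \<Rightarrow> 'a) \<Rightarrow> bool" where
  "equiv_rays E r s \<longleftrightarrow>
     (\<exists>P. infinite P \<and>
          (\<forall>p\<in>P. is_path E p \<and> hd p \<in> range r \<and> last p \<in> range s) \<and>
          (\<forall>p\<in>P. \<forall>q\<in>P. p \<noteq> q \<longrightarrow> set p \<inter> set q = {}))"

definition ends :: "('a \<Rightarrow> 'a \<Rightarrow> bool) \<Rightarrow> (nat \<Rightarrow> 'a) set set" where
  "ends E = {r. is_ray E r} // {(r, s). is_ray E r \<and> is_ray E s \<and> equiv_rays E r s}"

definition proper_coloring :: "('a \<Rightarrow> 'a \<Rightarrow> bool) \<Rightarrow> ('a \<Rightarrow> nat) \<Rightarrow> bool" where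
  "proper_coloring E c \<longleftrightarrow> (\<forall>u v. E u v \<longrightarrow> c u \<noteq> c v)"

definition chromatic_number :: "('a \<Rightarrow> 'a \<Rightarrow> bool) \<Rightarrow> nat" where
  "chromatic_number E = (LEAST k. \<exists>c. proper_coloring E c \<and> range c \<subseteq> {..<k})"

definition color_preserving_automorphisms ::
    "('a \<Rightarrow> 'a \<Rightarrow> bool) \<Rightarrow> ('a \<Rightarrow> nat) \<Rightarrow> ('a \<Rightarrow> 'a) set" where
  "color_preserving_automorphisms E c = {f \<in> automorphisms E. \<forall>v. c (f v) = c v}"

definition periodic_coloring :: "('a \<Rightarrow> 'a \<Rightarrow> bool) \<Rightarrow> ('a \<Rightarrow> nat) \<Rightarrow> bool" where
  "periodic_coloring E c \<longleftrightarrow> finitely_many_orbits (color_preserving_automorphisms E c)"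

end

theory Submission
  imports Defs
begin

lemma aut_bij: "f \<in> automorphisms E \<Longrightarrow> bij f"
  by (simp add: automorphisms_def)

lemma aut_edge: "f \<in> automorphisms E \<Longrightarrow> E u v \<longleftrightarrow> E (f u) (f v)"
  by (simp add: automorphisms_def)

lemma aut_id: "id \<in> automorphisms E"
  by (simp add: automorphisms_def)

lemma aut_comp: "f \<in> automorphisms E \<Longrightarrow> g \<in> automorphisms E \<Longrightarrow> f \<circ> g \<in> automorphisms E"
  by (auto simp: automorphisms_def bij_comp)

lemma aut_inv: assumes "f \<in> automorphisms E" shows "inv f \<in> automorphisms E"
proof -
  have b: "bij f" using assms by (simp add: automorphisms_def)
  have "E u v \<longleftrightarrow> E (inv f u) (inv f v)" for u v
    using aut_edge[OF assms, of "inv f u" "inv f v"] b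
    by (simp add: bij_is_surj surj_f_inv_f)
  then show ?thesis using b by (simp add: automorphisms_def bij_imp_bij_inv)
qed

lemma aut_funpow: "f \<in> automorphisms E \<Longrightarrow> f ^^ n \<in> automorphisms E"
  by (induction n) (auto simp: aut_id aut_comp)

definition tpow :: "('a \<Rightarrow> 'a) \<Rightarrow> int \<Rightarrow> 'a \<Rightarrow> 'a" where
  "tpow t n = (if 0 \<le> n then t ^^ nat n else inv t ^^ nat (- n))"

lemma tpow_0[simp]: "tpow t 0 = id"
  by (simp add: tpow_def)

lemma tpow_nat: "tpow t (int n) = t ^^ n"
  by (simp add: tpow_def)

lemma tpow_neg_nat: "tpow t (- int n) = inv t ^^ n"
  by (cases n) (auto simp: tpow_def simp del: of_nat_Suc)

lemma tpow_plus1: assumes "bij t" shows "tpow t (n + 1) = t \<circ> tpow t n"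
proof (cases "0 \<le> n")
  case True
  then have e: "nat (n + 1) = Suc (nat n)" by simp
  have "tpow t (n + 1) = t ^^ nat (n + 1)" using True by (simp add: tpow_def)
  also have "\<dots> = t \<circ> t ^^ nat n" by (simp only: e funpow.simps(2))
  also have "\<dots> = t \<circ> tpow t n" using True by (simp add: tpow_def)
  finally show ?thesis .
next
  case False
  define m where "m = nat (- n) - 1"
  have m: "n = - int (Suc m)" using False unfolding m_def by simp
  have 0: "t \<circ> inv t = id" using assms by (auto simp: fun_eq_iff bij_is_surj surj_f_inv_f)
  have 1: "t \<circ> (inv t ^^ Suc m) = inv t ^^ m"
    by (simp only: funpow.simps(2) o_assoc 0 id_comp)
  have 2: "n + 1 = - int m" using m by simp
  have "tpow t (n + 1) = inv t ^^ m" by (simp only: 2 tpow_neg_nat)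
  also have "\<dots> = t \<circ> (inv t ^^ Suc m)" using 1 by simp
  also have "\<dots> = t \<circ> tpow t n" by (simp only: m tpow_neg_nat)
  finally show ?thesis .
qed

lemma tpow_minus1: assumes "bij t" shows "tpow t (n - 1) = inv t \<circ> tpow t n"
proof -
  have "tpow t n = t \<circ> tpow t (n - 1)" using tpow_plus1[OF assms, of "n - 1"] by simp
  moreover have "inv t \<circ> t = id" using assms by (simp add: bij_is_inj)
  ultimately show ?thesis by (metis comp_assoc id_comp)
qed

lemma tpow_add: assumes "bij t" shows "tpow t (m + n) = tpow t m \<circ> tpow t n"
proof (induction m rule: int_induct[where k=0])
  case base then show ?case by simp
next
  case (step1 i)
  have "tpow t (i + 1 + n) = t \<circ> tpow t (i + n)" using tpow_plus1[OF assms, of "i + n"]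
    by (simp add: ac_simps)
  then show ?case using step1 tpow_plus1[OF assms, of i] by (simp add: comp_assoc)
next
  case (step2 i)
  have "tpow t (i - 1 + n) = inv t \<circ> tpow t (i + n)" using tpow_minus1[OF assms, of "i + n"]
    by (simp add: algebra_simps)
  then show ?case using step2 tpow_minus1[OF assms, of i] by (simp add: comp_assoc)
qed

lemma tpow_add_app: "bij t \<Longrightarrow> tpow t (m + n) x = tpow t m (tpow t n x)"
  by (simp add: tpow_add)

lemma tpow_aut: "t \<in> automorphisms E \<Longrightarrow> tpow t n \<in> automorphisms E"
  by (simp add: tpow_def aut_funpow aut_inv)

lemma tpow_bij: "t \<in> automorphisms E \<Longrightarrow> bij (tpow t n)"
  using tpow_aut aut_bij by blast

lemma tpow_cancel: "bij t \<Longrightarrow> tpow t (- n) (tpow t n x) = x"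
  using tpow_add_app[of t "-n" n x] by simp

lemma tpow_cancel2: "bij t \<Longrightarrow> tpow t n (tpow t (- n) x) = x"
  using tpow_add_app[of t n "-n" x] by simp

locale shift =
  fixes E :: "'a \<Rightarrow> 'a \<Rightarrow> bool" and t :: "'a \<Rightarrow> 'a" and h :: "'a \<Rightarrow> int"
  assumes simple: "simple_graph E" and lf: "locally_finite E" and taut: "t \<in> automorphisms E"
    and hstep: "\<And>v. h (t v) = h v + 1" and fin0: "finite {v. h v = 0}"
begin

lemma tb: "bij t" using taut aut_bij by blast

lemma h_inv: "h (inv t w) = h w - 1"
proof -
  have "h w = h (t (inv t w))" using tb by (simp add: bij_is_surj surj_f_inv_f)
  then show ?thesis using hstep by simp
qed

lemma h_tpow: "h (tpow t n v) = h v + n"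
proof (induction n rule: int_induct[where k=0])
  case base then show ?case by simp
next
  case (step1 i)
  then show ?case using tpow_plus1[OF tb, of i] hstep by simp
next
  case (step2 i)
  then show ?case using tpow_minus1[OF tb, of i] h_inv by simp
qed

lemma fin_level: "finite {v. h v = n}"
proof -
  have "{v. h v = n} \<subseteq> tpow t n ` {v. h v = 0}"
  proof
    fix v assume "v \<in> {v. h v = n}"
    then have "h (tpow t (- n) v) = 0" "tpow t n (tpow t (- n) v) = v"
      using h_tpow tpow_cancel2[OF tb] by auto
    then show "v \<in> tpow t n ` {v. h v = 0}" by (metis (mono_tags) image_eqI mem_Collect_eq)
  qed
  then show ?thesis using fin0 finite_subset by blast
qed

lemma fin_range: "finite {v. a \<le> h v \<and> h v < b}"
proof -
  have "{v. a \<le> h v \<and> h v < b} = (\<Union>n\<in>{a..<b}. {v. h v = n})" by auto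
  then show ?thesis using fin_level by simp
qed

lemma sym: "E u v \<Longrightarrow> E v u" using simple by (simp add: simple_graph_def)
lemma irr: "\<not> E v v" using simple by (simp add: simple_graph_def)

lemma edge_bound: "\<exists>L>0. \<forall>u v. E u v \<longrightarrow> \<bar>h v - h u\<bar> \<le> L"
proof -
  define Nb where "Nb = (\<Union>u\<in>{v. h v = 0}. {w. E u w})"
  have fNb: "finite Nb" unfolding Nb_def using fin_level lf by (auto simp: locally_finite_def)
  define L where "L = Max (insert 1 ((\<lambda>w. \<bar>h w\<bar>) ` Nb))"
  have L1: "L \<ge> 1" unfolding L_def using fNb by simp
  have Lb: "w \<in> Nb \<Longrightarrow> \<bar>h w\<bar> \<le> L" for w unfolding L_def using fNb by simp
  have "\<bar>h v - h u\<bar> \<le> L" if "E u v" for u v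
  proof -
    let ?f = "tpow t (- h u)"
    have fa: "?f \<in> automorphisms E" using tpow_aut[OF taut] .
    have "E (?f u) (?f v)" using iffD1[OF aut_edge[OF fa] that] .
    moreover have "h (?f u) = 0" using h_tpow by simp
    ultimately have "?f v \<in> Nb" unfolding Nb_def by blast
    then have "\<bar>h (?f v)\<bar> \<le> L" by (rule Lb)
    then show ?thesis using h_tpow by simp
  qed
  then show ?thesis using L1 by (intro exI[of _ L]) auto
qed

lemma coloring_exists: "\<exists>k c. proper_coloring E c \<and> range c \<subseteq> {..<k}"
proof -
  obtain L where L0: "L > 0" and LE: "\<And>u v. E u v \<Longrightarrow> \<bar>h v - h u\<bar> \<le> L"
    using edge_bound by blast
  obtain idx :: "'a \<Rightarrow> nat" and M :: nat where idxM: "idx ` {v. h v = 0} = {i. i < M}" and inj: "inj_on idx {v. h v = 0}"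
    using finite_imp_inj_to_nat_seg[OF fin_level[of 0]] by blast
  define c where "c v = idx (tpow t (- h v) v) + M * nat (h v mod (L + 1))" for v
  have lev0: "h (tpow t (- h v) v) = 0" for v using h_tpow by simp
  have idxlt: "idx (tpow t (- h v) v) < M" for v using idxM lev0 by blast
  have cdiv: "c v div M = nat (h v mod (L + 1))" for v
    using idxlt[of v] unfolding c_def by simp
  have cmod: "c v mod M = idx (tpow t (- h v) v)" for v
    using idxlt[of v] unfolding c_def by simp
  have "c u \<noteq> c v" if "E u v" for u v
  proof (cases "h u = h v")
    case True
    have "u \<noteq> v" using that irr by blast
    moreover have "inj (tpow t (- h u))" using tpow_bij[OF taut] bij_is_inj by blast
    ultimately have ne: "tpow t (- h u) u \<noteq> tpow t (- h v) v"
      using True by (simp add: inj_eq)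
    have "tpow t (- h u) u \<in> {v. h v = 0}" "tpow t (- h v) v \<in> {v. h v = 0}" using lev0 by auto
    then have "idx (tpow t (- h u) u) \<noteq> idx (tpow t (- h v) v)"
      using inj ne by (simp add: inj_on_eq_iff)
    then show ?thesis using cmod by metis
  next
    case False
    have d: "\<bar>h v - h u\<bar> \<le> L" using LE that .
    have "h u mod (L + 1) \<noteq> h v mod (L + 1)"
    proof
      assume "h u mod (L + 1) = h v mod (L + 1)"
      then have "(L + 1) dvd (h v - h u)" by (metis mod_eq_dvd_iff dvd_diff_commute)
      then obtain z where z: "h v - h u = (L + 1) * z" by (auto elim: dvdE)
      have "z \<noteq> 0" using False z by auto
      then have "\<bar>(L + 1) * z\<bar> \<ge> L + 1" using L0 by (simp add: abs_mult)
      then show False using d z by simp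
    qed
    moreover have "h u mod (L + 1) \<ge> 0" "h v mod (L + 1) \<ge> 0" using L0 by simp_all
    ultimately have "nat (h u mod (L + 1)) \<noteq> nat (h v mod (L + 1))" by simp
    then show ?thesis using cdiv by metis
  qed
  then have "proper_coloring E c" by (simp add: proper_coloring_def)
  moreover have "range c \<subseteq> {..<M * (nat L + 1)}"
  proof
    fix x assume "x \<in> range c"
    then obtain v where v: "x = c v" by blast
    have "h v mod (L + 1) < L + 1" using L0 pos_mod_bound[of "L+1" "h v"] by linarith
    then have "nat (h v mod (L + 1)) \<le> nat L" by simp
    then have m: "M * nat (h v mod (L + 1)) \<le> M * nat L" by (rule mult_le_mono2)
    have "c v < M + M * nat L" using m idxlt[of v] unfolding c_def by linarith
    then show "x \<in> {..<M * (nat L + 1)}" using v by (simp add: algebra_simps)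
  qed
  ultimately show ?thesis by blast
qed

lemma cpa_comp: "f \<in> color_preserving_automorphisms E c \<Longrightarrow> g \<in> color_preserving_automorphisms E c
   \<Longrightarrow> f \<circ> g \<in> color_preserving_automorphisms E c"
  by (auto simp: color_preserving_automorphisms_def aut_comp)

lemma periodic_main: "\<exists>c. proper_coloring E c \<and> range c \<subseteq> {..<chromatic_number E} \<and> periodic_coloring E c"
proof -
  let ?chi = "chromatic_number E"
  obtain c where cp: "proper_coloring E c" and cr: "range c \<subseteq> {..<?chi}"
    using LeastI_ex[OF coloring_exists] unfolding chromatic_number_def by blast
  obtain L where L0: "L > 0" and LE: "\<And>u v. E u v \<Longrightarrow> \<bar>h v - h u\<bar> \<le> L"
    using edge_bound by blast
  define W0 where "W0 = {x. 0 \<le> h x \<and> h x < L}"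
  have fW0: "finite W0" unfolding W0_def using fin_range .
  define pat where "pat k = (\<lambda>x. if x \<in> W0 then c (tpow t (int k * L) x) else 0)" for k :: nat
  define F where "F = {f. \<forall>x. (x \<in> W0 \<longrightarrow> f x \<in> {..<?chi}) \<and> (x \<notin> W0 \<longrightarrow> f x = (0::nat))}"
  have fF: "finite F" unfolding F_def using finite_set_of_finite_funs[OF fW0, of "{..<?chi}"] by simp
  have cr': "c x < ?chi" for x using cr by auto
  have "range pat \<subseteq> F" using cr' unfolding F_def pat_def by auto
  then have "finite (pat ` UNIV)" using fF finite_subset by blast
  then obtain k0 where "infinite {k. pat k = pat k0}"
    using pigeonhole_infinite[of "UNIV :: nat set" pat] by auto
  then obtain k1 where k1: "pat k1 = pat k0" using not_finite_existsD by auto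
  have "\<exists>k2. k2 > k1 \<and> pat k2 = pat k0"
  proof (rule ccontr)
    assume "\<not> ?thesis"
    then have "{k. pat k = pat k0} \<subseteq> {..k1}" by (auto simp: not_less)
    then show False using \<open>infinite {k. pat k = pat k0}\<close> finite_subset by blast
  qed
  then obtain k2 where k2: "k2 > k1" "pat k2 = pat k0" by blast
  have k12: "k1 < k2" "pat k1 = pat k2" using k1 k2 by auto
  define i where "i = int k1 * L"
  define p where "p = int (k2 - k1) * L"
  have p0: "p > 0" unfolding p_def using k12 L0 by simp
  have pL: "p \<ge> L" unfolding p_def using k12 L0 by simp
  have ip: "int k2 * L = p + i" unfolding p_def i_def using k12 by (simp add: algebra_simps of_nat_diff)
  have Pat: "c (tpow t p y) = c y" if "i \<le> h y" "h y < i + L" for y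
  proof -
    define x where "x = tpow t (- i) y"
    have hx: "h x = h y - i" unfolding x_def using h_tpow by simp
    then have "x \<in> W0" unfolding W0_def using that by simp
    then have "c (tpow t i x) = c (tpow t (int k2 * L) x)"
      using fun_cong[OF k12(2), of x] unfolding pat_def i_def by simp
    moreover have "tpow t i x = y" unfolding x_def using tpow_cancel2[OF tb] by simp
    moreover have "tpow t (int k2 * L) x = tpow t p y"
      unfolding ip x_def by (simp add: tpow_add_app[OF tb] tpow_cancel2[OF tb])
    ultimately show ?thesis by simp
  qed
  define q where "q v = (h v - i) div p" for v
  have qd: "q v * p \<le> h v - i" "h v - i < q v * p + p" for v
  proof -
    have "(h v - i) div p * p + (h v - i) mod p = h v - i" by (rule div_mult_mod_eq)
    moreover have "0 \<le> (h v - i) mod p" "(h v - i) mod p < p" using p0 by simp_all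
    ultimately show "q v * p \<le> h v - i" "h v - i < q v * p + p" unfolding q_def by linarith+
  qed
  have qshift: "q (tpow t p v) = q v + 1" for v
  proof -
    have "q (tpow t p v) = (h v - i + p) div p" unfolding q_def h_tpow by (simp add: algebra_simps)
    also have "\<dots> = q v + 1" unfolding q_def using p0 by (simp add: div_add_self2)
    finally show ?thesis .
  qed
  define c' where "c' v = c (tpow t (- (q v * p)) v)" for v
  have c'shift: "c' (tpow t p v) = c' v" for v
  proof -
    have "c' (tpow t p v) = c (tpow t (- ((q v + 1) * p)) (tpow t p v))" unfolding c'_def qshift ..
    also have "\<dots> = c (tpow t (- ((q v + 1) * p) + p) v)" by (simp only: tpow_add_app[OF tb])
    also have "- ((q v + 1) * p) + p = - (q v * p)" by (simp add: algebra_simps)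
    finally show ?thesis unfolding c'_def by simp
  qed
  have key: "c' u \<noteq> c' v" if e: "E u v" and le: "h u \<le> h v" for u v
  proof -
    define a where "a = q u"
    have ba1: "q u \<le> q v" unfolding q_def using le p0 by (simp add: zdiv_mono1)
    have "h v - i \<le> (h u - i) + p" using LE[OF e] le pL by simp
    then have "q v \<le> ((h u - i) + p) div p" unfolding q_def using p0 by (simp add: zdiv_mono1)
    also have "\<dots> = q u + 1" unfolding q_def using p0 by (simp add: div_add_self2)
    finally have ba2: "q v \<le> q u + 1" .
    define f where "f = tpow t (- (a * p))"
    have fa: "f \<in> automorphisms E" unfolding f_def using tpow_aut[OF taut] .
    have ef: "E (f u) (f v)" using iffD1[OF aut_edge[OF fa] e] .
    then have cf: "c (f u) \<noteq> c (f v)" using cp by (simp add: proper_coloring_def)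
    show ?thesis
    proof (cases "q v = q u")
      case True
      then show ?thesis using cf unfolding c'_def f_def a_def by simp
    next
      case False
      then have qv: "q v = a + 1" using ba1 ba2 unfolding a_def by simp
      define v2 where "v2 = tpow t (- ((a + 1) * p)) v"
      have fv: "f v = tpow t p v2" unfolding f_def v2_def
        by (simp add: tpow_add_app[OF tb, symmetric] algebra_simps)
      have hv2: "h v2 = h v - (a * p + p)" unfolding v2_def h_tpow by (simp add: distrib_right)
      have "i \<le> h v2" using qd(1)[of v] qv hv2 by (simp add: distrib_right)
      moreover have "h v2 < i + L" using qd(2)[of u] LE[OF e] le hv2 unfolding a_def by linarith
      ultimately have "c (tpow t p v2) = c v2" by (rule Pat)
      moreover have "c' v = c v2" unfolding c'_def v2_def qv ..
      moreover have "c' u = c (f u)" unfolding c'_def f_def a_def ..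
      ultimately show ?thesis using cf fv by simp
    qed
  qed
  have "proper_coloring E c'" unfolding proper_coloring_def
  proof (intro allI impI)
    fix u v assume e: "E u v"
    show "c' u \<noteq> c' v"
    proof (cases "h u \<le> h v")
      case True then show ?thesis using key e by blast
    next
      case False then show ?thesis using key[OF sym[OF e]] by auto
    qed
  qed
  moreover have "range c' \<subseteq> {..<?chi}" using cr unfolding c'_def by auto
  moreover have "periodic_coloring E c'"
  proof -
    let ?H = "color_preserving_automorphisms E c'"
    have pm: "c' (tpow t (m * p) v) = c' v" for m v
    proof (induction m rule: int_induct[where k=0])
      case base then show ?case by simp
    next
      case (step1 m)
      have "tpow t ((m + 1) * p) v = tpow t p (tpow t (m * p) v)"
        by (simp add: tpow_add_app[OF tb, symmetric] algebra_simps)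
      then show ?case using step1 c'shift by simp
    next
      case (step2 m)
      have "tpow t (m * p) v = tpow t p (tpow t ((m - 1) * p) v)"
        by (simp add: tpow_add_app[OF tb, symmetric] algebra_simps)
      then have "c' (tpow t (m * p) v) = c' (tpow t ((m - 1) * p) v)" using c'shift by simp
      then show ?case using step2 by simp
    qed
    have inH: "tpow t (m * p) \<in> ?H" for m
      using pm tpow_aut[OF taut] by (simp add: color_preserving_automorphisms_def)
    define orb where "orb v = {g v | g. g \<in> ?H}" for v
    define Wp where "Wp = {x. i \<le> h x \<and> h x < i + p}"
    have fWp: "finite Wp" unfolding Wp_def using fin_range .
    have "orb v \<in> orb ` Wp" for v
    proof -
      define w where "w = tpow t (- (q v * p)) v"
      have vw: "v = tpow t (q v * p) w" unfolding w_def using tpow_cancel2[OF tb] by simp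
      have wv: "w = tpow t (- q v * p) v" unfolding w_def by simp
      have "w \<in> Wp" unfolding Wp_def w_def using qd[of v] by (simp add: h_tpow)
      moreover have "orb v = orb w"
      proof
        show "orb v \<subseteq> orb w"
        proof
          fix x assume "x \<in> orb v"
          then obtain g where g: "g \<in> ?H" "x = g v" unfolding orb_def by blast
          then have "g \<circ> tpow t (q v * p) \<in> ?H" using cpa_comp inH by blast
          moreover have "x = (g \<circ> tpow t (q v * p)) w" using g vw by simp
          ultimately show "x \<in> orb w" unfolding orb_def by blast
        qed
      next
        show "orb w \<subseteq> orb v"
        proof
          fix x assume "x \<in> orb w"
          then obtain g where g: "g \<in> ?H" "x = g w" unfolding orb_def by blast
          then have "g \<circ> tpow t (- q v * p) \<in> ?H" using cpa_comp inH by blast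
          moreover have "x = (g \<circ> tpow t (- q v * p)) v" using g wv by simp
          ultimately show "x \<in> orb v" unfolding orb_def by blast
        qed
      qed
      ultimately show ?thesis by blast
    qed
    then have "range orb \<subseteq> orb ` Wp" by blast
    then have "finite (range orb)" using fWp finite_subset by blast
    then show ?thesis unfolding periodic_coloring_def finitely_many_orbits_def orb_def by simp
  qed
  ultimately show ?thesis by blast
qed

end

definition av :: "('a \<Rightarrow> 'a \<Rightarrow> bool) \<Rightarrow> 'a set \<Rightarrow> 'a \<Rightarrow> 'a \<Rightarrow> bool" where
  "av E S x y \<longleftrightarrow> E x y \<and> x \<notin> S \<and> y \<notin> S"

definition comp :: "('a \<Rightarrow> 'a \<Rightarrow> bool) \<Rightarrow> 'a set \<Rightarrow> 'a \<Rightarrow> 'a set" where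
  "comp E S x = {y. (av E S)\<^sup>*\<^sup>* x y}"

definition conn_in :: "('a \<Rightarrow> 'a \<Rightarrow> bool) \<Rightarrow> 'a set \<Rightarrow> 'a \<Rightarrow> 'a \<Rightarrow> bool" where
  "conn_in E X = (\<lambda>u v. E u v \<and> u \<in> X \<and> v \<in> X)\<^sup>*\<^sup>*"

lemma rt_restrict:
  assumes "R\<^sup>*\<^sup>* x y" "P x" "\<And>u v. R u v \<Longrightarrow> P u \<Longrightarrow> P v \<and> R' u v"
  shows "R'\<^sup>*\<^sup>* x y"
proof -
  have "R'\<^sup>*\<^sup>* x y \<and> P y" using assms(1)
  proof (induction rule: rtranclp_induct)
    case base then show ?case using assms(2) by simp
  next
    case (step y z)
    then show ?case using assms(3)[of y z] by (meson rtranclp.rtrancl_into_rtrancl)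
  qed
  then show ?thesis by simp
qed

lemma rt_map:
  assumes "R\<^sup>*\<^sup>* x y" "\<And>u v. R u v \<Longrightarrow> R' (g u) (g v)"
  shows "R'\<^sup>*\<^sup>* (g x) (g y)"
  using assms(1)
proof (induction rule: rtranclp_induct)
  case base then show ?case by simp
next
  case (step y z)
  then show ?case using assms(2) by (meson rtranclp.rtrancl_into_rtrancl)
qed

locale G =
  fixes E :: "'a \<Rightarrow> 'a \<Rightarrow> bool"
  assumes simple: "simple_graph E" and lf: "locally_finite E" and conn: "connected_graph E"
begin

lemma sym: "E u v \<Longrightarrow> E v u" using simple by (simp add: simple_graph_def)
lemma irr: "\<not> E v v" using simple by (simp add: simple_graph_def)
lemma connE: "E\<^sup>*\<^sup>* u v" using conn by (simp add: connected_graph_def)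
lemma fin_nb: "finite {v. E u v}" using lf by (simp add: locally_finite_def)
lemma fin_nb': "finite {v. E v u}" using fin_nb[of u] sym by (metis (mono_tags, lifting) Collect_cong)

lemma av_sym: "av E S x y \<Longrightarrow> av E S y x" by (simp add: av_def sym)

lemma rt_sym: "(av E S)\<^sup>*\<^sup>* x y \<Longrightarrow> (av E S)\<^sup>*\<^sup>* y x"
proof (induction rule: rtranclp_induct)
  case base then show ?case by simp
next
  case (step y z)
  then show ?case using av_sym by (meson converse_rtranclp_into_rtranclp)
qed

lemma comp_self: "x \<in> comp E S x" by (simp add: comp_def)

lemma comp_notin: assumes "x \<notin> S" "y \<in> comp E S x" shows "y \<notin> S"
proof -
  have "(av E S)\<^sup>*\<^sup>* x y" using assms(2) by (simp add: comp_def)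
  then show ?thesis using assms(1) by (cases rule: rtranclp.cases) (auto simp: av_def)
qed

lemma comp_trans: "y \<in> comp E S x \<Longrightarrow> z \<in> comp E S y \<Longrightarrow> z \<in> comp E S x"
  unfolding comp_def by simp

lemma comp_eq: "y \<in> comp E S x \<Longrightarrow> comp E S y = comp E S x"
  unfolding comp_def using rt_sym by (auto intro: rtranclp_trans)

lemma comp_disj: "comp E S x \<noteq> comp E S y \<Longrightarrow> comp E S x \<inter> comp E S y = {}"
  using comp_eq by blast

lemma comp_step: "x \<notin> S \<Longrightarrow> y \<in> comp E S x \<Longrightarrow> E y z \<Longrightarrow> z \<notin> S \<Longrightarrow> z \<in> comp E S x"
  using comp_notin[of x S y] unfolding comp_def
  by (simp add: av_def rtranclp.rtrancl_into_rtrancl)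

lemma comp_mono: "T \<subseteq> S \<Longrightarrow> comp E S x \<subseteq> comp E T x"
  unfolding comp_def
proof
  fix y assume "T \<subseteq> S" "y \<in> {y. (av E S)\<^sup>*\<^sup>* x y}"
  then show "y \<in> {y. (av E T)\<^sup>*\<^sup>* x y}"
    using rtranclp_mono[of "av E S" "av E T"] by (auto simp: av_def le_fun_def)
qed

lemma comp_sub: assumes "x \<notin> K" "comp E K x \<inter> T = {}" shows "comp E K x \<subseteq> comp E (K \<union> T) x"
proof
  fix w assume w: "w \<in> comp E K x"
  have "(av E (K \<union> T))\<^sup>*\<^sup>* x w"
    using w[unfolded comp_def, simplified]
  proof (rule rt_restrict[where P="\<lambda>u. u \<in> comp E K x"])
    show "x \<in> comp E K x" by (rule comp_self)
  next
    fix u v assume "av E K u v" "u \<in> comp E K x"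
    moreover then have "v \<in> comp E K x" using comp_step assms(1) by (auto simp: av_def)
    ultimately show "v \<in> comp E K x \<and> av E (K \<union> T) u v" using assms(2) by (auto simp: av_def)
  qed
  then show "w \<in> comp E (K \<union> T) x" by (simp add: comp_def)
qed

lemma conn_in_comp: assumes a: "conn_in E X x y" and b: "X \<inter> T = {}" shows "y \<in> comp E T x"
proof -
  have le: "(\<lambda>u v. E u v \<and> u \<in> X \<and> v \<in> X) \<le> av E T" using b by (auto simp: av_def)
  have "(av E T)\<^sup>*\<^sup>* x y" using predicate2D[OF rtranclp_mono[OF le]] a[unfolded conn_in_def] .
  then show ?thesis by (simp add: comp_def)
qed

lemma conn_in_mono: assumes a: "conn_in E X x y" and b: "X \<subseteq> Y" shows "conn_in E Y x y"
proof -
  have le: "(\<lambda>u v. E u v \<and> u \<in> X \<and> v \<in> X) \<le> (\<lambda>u v. E u v \<and> u \<in> Y \<and> v \<in> Y)" using b by auto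
  show ?thesis using predicate2D[OF rtranclp_mono[OF le]] a[unfolded conn_in_def] unfolding conn_in_def .
qed

lemma conn_in_sym: "conn_in E X x y \<Longrightarrow> conn_in E X y x"
  unfolding conn_in_def
proof (induction rule: rtranclp_induct)
  case base then show ?case by simp
next
  case (step y z)
  then have "(\<lambda>u v. E u v \<and> u \<in> X \<and> v \<in> X) z y" using sym by simp
  then show ?case using step(3) by (rule converse_rtranclp_into_rtranclp)
qed

lemma conn_in_trans: "conn_in E X x y \<Longrightarrow> conn_in E X y z \<Longrightarrow> conn_in E X x z"
  unfolding conn_in_def by simp

lemma conn_in_edge: "E x y \<Longrightarrow> x \<in> X \<Longrightarrow> y \<in> X \<Longrightarrow> conn_in E X x y"
  unfolding conn_in_def by auto

lemma comp_conn_in: assumes "x \<notin> K" "y \<in> comp E K x" shows "conn_in E (comp E K x) x y"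
proof -
  have "(av E K)\<^sup>*\<^sup>* x y" using assms(2) by (simp add: comp_def)
  then show ?thesis unfolding conn_in_def
  proof (rule rt_restrict[where P="\<lambda>u. u \<in> comp E K x"])
    show "x \<in> comp E K x" by (rule comp_self)
  next
    fix u v assume "av E K u v" "u \<in> comp E K x"
    moreover then have "v \<in> comp E K x" using comp_step assms(1) by (auto simp: av_def)
    ultimately show "v \<in> comp E K x \<and> E u v \<and> u \<in> comp E K x \<and> v \<in> comp E K x" by (auto simp: av_def)
  qed
qed

lemma aut_av: assumes "f \<in> automorphisms E" "av E S u v" shows "av E (f ` S) (f u) (f v)"
proof -
  have "inj f" using assms(1) aut_bij bij_is_inj by blast
  then show ?thesis using assms iffD1[OF aut_edge[OF assms(1)]] by (auto simp: av_def inj_image_mem_iff)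
qed

lemma comp_aut: assumes f: "f \<in> automorphisms E" shows "f ` comp E S x = comp E (f ` S) (f x)"
proof
  show "f ` comp E S x \<subseteq> comp E (f ` S) (f x)"
  proof
    fix z assume "z \<in> f ` comp E S x"
    then obtain y where y: "z = f y" "(av E S)\<^sup>*\<^sup>* x y" by (auto simp: comp_def)
    have "(av E (f ` S))\<^sup>*\<^sup>* (f x) (f y)" using y(2)
      by (rule rt_map[where g="f"]) (rule aut_av[OF f])
    then show "z \<in> comp E (f ` S) (f x)" using y by (simp add: comp_def)
  qed
next
  have fi: "inv f \<in> automorphisms E" using aut_inv[OF f] .
  have b: "bij f" using f aut_bij by blast
  have iS: "inv f ` f ` S = S" using b by (simp add: bij_is_inj image_inv_f_f)
  show "comp E (f ` S) (f x) \<subseteq> f ` comp E S x"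
  proof
    fix y assume "y \<in> comp E (f ` S) (f x)"
    then have "(av E (f ` S))\<^sup>*\<^sup>* (f x) y" by (simp add: comp_def)
    then have "(av E (inv f ` f ` S))\<^sup>*\<^sup>* (inv f (f x)) (inv f y)"
      by (rule rt_map[where g="inv f"]) (rule aut_av[OF fi])
    then have "inv f y \<in> comp E S x" using iS b by (simp add: comp_def bij_is_inj)
    moreover have "y = f (inv f y)" using b by (simp add: bij_is_surj surj_f_inv_f)
    ultimately show "y \<in> f ` comp E S x" by blast
  qed
qed

lemma aut_relpow: assumes "f \<in> automorphisms E" "(E ^^ m) u v" shows "(E ^^ m) (f u) (f v)"
  using assms(2)
proof (induction m arbitrary: v)
  case 0 then show ?case by simp
next
  case (Suc m)
  then obtain w where "(E ^^ m) u w" "E w v" by (meson relpowp_Suc_E)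
  then show ?case using Suc.IH iffD1[OF aut_edge[OF assms(1)]] by (meson relpowp_Suc_I)
qed

lemma boundary_walk:
  assumes "x \<notin> S" "v \<in> comp E S x" "(E ^^ m) v k" "k \<notin> comp E S x"
  shows "\<exists>i\<le>m. \<exists>w\<in>S. (E ^^ i) v w"
  using assms(3,4)
proof (induction m arbitrary: k)
  case 0 then show ?case using assms(2) by simp
next
  case (Suc m)
  then obtain u where u: "(E ^^ m) v u" "E u k" by (meson relpowp_Suc_E)
  show ?case
  proof (cases "u \<in> comp E S x")
    case True
    show ?thesis
    proof (cases "k \<in> S")
      case True then show ?thesis using Suc.prems(1) by blast
    next
      case False
      then have "k \<in> comp E S x" using comp_step[OF assms(1) \<open>u \<in> comp E S x\<close> u(2)] by simp
      then show ?thesis using Suc.prems by simp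
    qed
  next
    case False
    then show ?thesis using Suc.IH[OF u(1)] le_SucI by blast
  qed
qed

lemma exit_lemma:
  assumes "E\<^sup>*\<^sup>* x s" "x \<notin> S" "s \<in> S"
  shows "\<exists>y z. y \<in> comp E S x \<and> E y z \<and> z \<in> S"
  using assms
proof (induction rule: converse_rtranclp_induct)
  case base then show ?case by simp
next
  case (step x y)
  show ?case
  proof (cases "y \<in> S")
    case True then show ?thesis using step comp_self by blast
  next
    case False
    then obtain y' z where "y' \<in> comp E S y" "E y' z" "z \<in> S" using step by blast
    moreover have "av E S x y" using step False by (simp add: av_def)
    then have "y \<in> comp E S x" by (simp add: comp_def)
    ultimately show ?thesis using comp_trans by blast
  qed
qed

lemma finite_comps: assumes "finite S" "S \<noteq> {}" shows "finite (comp E S ` (- S))"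
proof -
  obtain s0 where s0: "s0 \<in> S" using assms(2) by blast
  define NS where "NS = (\<Union>z\<in>S. {y. E z y})"
  have fNS: "finite NS" unfolding NS_def using assms(1) fin_nb by simp
  have "comp E S ` (- S) \<subseteq> comp E S ` NS"
  proof
    fix C assume "C \<in> comp E S ` (- S)"
    then obtain x where x: "x \<notin> S" "C = comp E S x" by blast
    then obtain y z where yz: "y \<in> comp E S x" "E y z" "z \<in> S" using exit_lemma[OF connE x(1) s0] by blast
    then have "y \<in> NS" unfolding NS_def using sym by blast
    moreover have "C = comp E S y" using x yz comp_eq by simp
    ultimately show "C \<in> comp E S ` NS" by blast
  qed
  then show ?thesis using fNS finite_subset by blast
qed

end

definition chain :: "('a \<Rightarrow> 'a \<Rightarrow> bool) \<Rightarrow> 'a list \<Rightarrow> bool" where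
  "chain E p \<longleftrightarrow> (\<forall>i. Suc i < length p \<longrightarrow> E (p ! i) (p ! Suc i))"

lemma is_path_chain: "is_path E p \<longleftrightarrow> p \<noteq> [] \<and> distinct p \<and> chain E p"
  by (simp add: is_path_def chain_def)

lemma chain_Cons: "chain E (x # p) \<longleftrightarrow> (p \<noteq> [] \<longrightarrow> E x (hd p)) \<and> chain E p"
proof
  assume a: "chain E (x # p)"
  have "p \<noteq> [] \<longrightarrow> E x (hd p)" using a[unfolded chain_def, rule_format, of 0] by (simp add: hd_conv_nth)
  moreover have "chain E p" unfolding chain_def using a[unfolded chain_def] by force
  ultimately show "(p \<noteq> [] \<longrightarrow> E x (hd p)) \<and> chain E p" by simp
next
  assume a: "(p \<noteq> [] \<longrightarrow> E x (hd p)) \<and> chain E p"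
  show "chain E (x # p)" unfolding chain_def
  proof (intro allI impI)
    fix i assume i: "Suc i < length (x # p)"
    show "E ((x # p) ! i) ((x # p) ! Suc i)"
    proof (cases i)
      case 0 then show ?thesis using a i by (auto simp: hd_conv_nth)
    next
      case (Suc j) then show ?thesis using a i by (simp add: chain_def)
    qed
  qed
qed

lemma chain_append2: "chain E (xs @ ys) \<Longrightarrow> chain E ys"
  by (induction xs) (auto simp: chain_Cons)

lemma chain_rev: assumes "\<And>u v. E u v \<Longrightarrow> E v u" "chain E p" shows "chain E (rev p)"
  unfolding chain_def
proof (intro allI impI)
  fix i assume i: "Suc i < length (rev p)"
  define j where "j = length p - Suc (Suc i)"
  have j: "Suc j < length p" "length p - Suc i = Suc j" using i unfolding j_def by auto
  have "rev p ! i = p ! Suc j" "rev p ! Suc i = p ! j" using i j unfolding j_def by (auto simp: rev_nth)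
  moreover have "E (p ! j) (p ! Suc j)" using assms(2) j by (simp add: chain_def)
  ultimately show "E (rev p ! i) (rev p ! Suc i)" using assms(1) by simp
qed

context G
begin

lemma path_walk: "p \<noteq> [] \<Longrightarrow> chain E p \<Longrightarrow> set p \<inter> S = {} \<Longrightarrow> (av E S)\<^sup>*\<^sup>* (hd p) (last p)"
proof (induction p)
  case Nil then show ?case by simp
next
  case (Cons a p)
  show ?case
  proof (cases "p = []")
    case True then show ?thesis by simp
  next
    case False
    have "hd p \<notin> S" using Cons.prems(3) hd_in_set[OF False] by auto
    then have "av E S a (hd p)" using Cons.prems False by (auto simp: chain_Cons av_def)
    moreover have "(av E S)\<^sup>*\<^sup>* (hd p) (last p)" using Cons False by (simp add: chain_Cons)
    ultimately show ?thesis using False by (simp add: converse_rtranclp_into_rtranclp)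
  qed
qed

lemma walk_path:
  assumes "(av E S)\<^sup>*\<^sup>* x y" "y \<notin> S"
  shows "\<exists>p. is_path E p \<and> hd p = x \<and> last p = y \<and> set p \<inter> S = {}"
  using assms
proof (induction rule: converse_rtranclp_induct)
  case base
  then show ?case by (intro exI[of _ "[y]"]) (simp add: is_path_def)
next
  case (step x z)
  then obtain p where p: "is_path E p" "hd p = z" "last p = y" "set p \<inter> S = {}" by blast
  show ?case
  proof (cases "x \<in> set p")
    case True
    then obtain xs ys where xs: "p = xs @ x # ys" by (meson split_list)
    have "is_path E (x # ys)" using p(1) xs chain_append2[of E xs "x # ys"] by (simp add: is_path_chain)
    moreover have "last (x # ys) = y" using p(3) xs by simp
    moreover have "set (x # ys) \<inter> S = {}" using p(4) xs by auto
    ultimately show ?thesis by (intro exI[of _ "x # ys"]) simp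
  next
    case False
    have "p \<noteq> []" using p(1) by (simp add: is_path_def)
    then have "is_path E (x # p)" using p False step(1) by (simp add: is_path_chain chain_Cons av_def)
    moreover have "set (x # p) \<inter> S = {}" using p(4) step(1) by (simp add: av_def)
    ultimately show ?thesis using p \<open>p \<noteq> []\<close> by (intro exI[of _ "x # p"]) simp
  qed
qed

lemma first_step:
  assumes "(av E T)\<^sup>*\<^sup>* c y"
  shows "y = c \<or> (\<exists>n. E c n \<and> n \<notin> T \<and> n \<noteq> c \<and> (av E (insert c T))\<^sup>*\<^sup>* n y)"
  using assms
proof (induction rule: rtranclp_induct)
  case base then show ?case by simp
next
  case (step y z)
  show ?case
  proof (cases "z = c")
    case True then show ?thesis by simp
  next
    case zc: False
    show ?thesis
    proof (cases "y = c")
      case True then show ?thesis using step(2) zc by (auto simp: av_def)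
    next
      case False
      then obtain n where n: "E c n" "n \<notin> T" "n \<noteq> c" "(av E (insert c T))\<^sup>*\<^sup>* n y" using step by blast
      have "av E (insert c T) y z" using step(2) zc False by (simp add: av_def)
      then show ?thesis using n by (meson rtranclp.rtrancl_into_rtrancl)
    qed
  qed
qed

definition kinv :: "'a set \<Rightarrow> 'a \<Rightarrow> 'a \<times> 'a set \<Rightarrow> bool" where
  "kinv S x st \<longleftrightarrow> finite (snd st) \<and> fst st \<in> snd st \<and> fst st \<in> comp E S x \<and>
     infinite {y. (av E (S \<union> (snd st - {fst st})))\<^sup>*\<^sup>* (fst st) y}"

lemma kinv_step:
  assumes x: "x \<notin> S" and k: "kinv S x (c, V)"
  shows "\<exists>n. E c n \<and> n \<notin> V \<and> n \<notin> S \<and> kinv S x (n, insert n V)"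
proof -
  define T where "T = S \<union> (V - {c})"
  have inf: "infinite {y. (av E T)\<^sup>*\<^sup>* c y}" using k unfolding kinv_def T_def by simp
  define Nc where "Nc = {n. E c n \<and> n \<notin> T \<and> n \<noteq> c}"
  have fNc: "finite Nc" unfolding Nc_def using fin_nb[of c] by (auto intro: finite_subset)
  have "{y. (av E T)\<^sup>*\<^sup>* c y} \<subseteq> insert c (\<Union>n\<in>Nc. {y. (av E (insert c T))\<^sup>*\<^sup>* n y})"
    using first_step unfolding Nc_def by blast
  then have "infinite (\<Union>n\<in>Nc. {y. (av E (insert c T))\<^sup>*\<^sup>* n y})"
    using inf finite_subset by (metis finite_insert)
  then obtain n where n: "n \<in> Nc" "infinite {y. (av E (insert c T))\<^sup>*\<^sup>* n y}" using fNc by blast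
  have cV: "c \<in> V" "finite V" "c \<in> comp E S x" using k by (auto simp: kinv_def)
  have nV: "n \<notin> V" "n \<notin> S" "E c n" using n(1) unfolding Nc_def T_def by auto
  have eq: "S \<union> (insert n V - {n}) = insert c T" using cV nV unfolding T_def by auto
  have "n \<in> comp E S x" using comp_step[OF x cV(3) nV(3) nV(2)] .
  then have "kinv S x (n, insert n V)" using cV n(2) unfolding kinv_def fst_conv snd_conv eq by simp
  then show ?thesis using nV by blast
qed

lemma koenig:
  assumes x: "x \<notin> S" and inf: "infinite (comp E S x)"
  shows "\<exists>r. is_ray E r \<and> range r \<subseteq> comp E S x"
proof -
  define nxt where "nxt st = (SOME st'. E (fst st) (fst st') \<and> fst st' \<notin> snd st \<and>
      snd st' = insert (fst st') (snd st) \<and> kinv S x st')" for st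
  define st where "st = rec_nat (x, {x}) (\<lambda>_ s. nxt s)"
  have st0: "st 0 = (x, {x})" unfolding st_def by simp
  have stS: "st (Suc k) = nxt (st k)" for k unfolding st_def by simp
  have nxt_ok: "E (fst s) (fst (nxt s)) \<and> fst (nxt s) \<notin> snd s \<and>
      snd (nxt s) = insert (fst (nxt s)) (snd s) \<and> kinv S x (nxt s)" if ks: "kinv S x s" for s
  proof -
    obtain c V where s: "s = (c, V)" by fastforce
    obtain n where "E c n \<and> n \<notin> V \<and> n \<notin> S \<and> kinv S x (n, insert n V)"
      using kinv_step[OF x, of c V] ks s by blast
    then have "\<exists>st'. E (fst s) (fst st') \<and> fst st' \<notin> snd s \<and>
      snd st' = insert (fst st') (snd s) \<and> kinv S x st'" using s by (intro exI[of _ "(n, insert n V)"]) simp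
    then show ?thesis unfolding nxt_def by (rule someI_ex)
  qed
  have inv: "kinv S x (st k)" for k
  proof (induction k)
    case 0
    have "{y. (av E (S \<union> ({x} - {x})))\<^sup>*\<^sup>* x y} = comp E S x" by (simp add: comp_def)
    then show ?case using inf comp_self unfolding st0 kinv_def by simp
  next
    case (Suc k) then show ?case using nxt_ok stS by simp
  qed
  define r where "r k = fst (st k)" for k
  have edge: "E (r k) (r (Suc k))" for k using nxt_ok[OF inv[of k]] stS unfolding r_def by simp
  have mono: "snd (st j) \<subseteq> snd (st k)" if "j \<le> k" for j k
    using that
  proof (induction k)
    case 0 then show ?case by simp
  next
    case (Suc k)
    then show ?case using nxt_ok[OF inv[of k]] stS by (auto simp: le_Suc_eq)
  qed
  have inV: "r k \<in> snd (st k)" for k using inv[of k] unfolding r_def kinv_def by simp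
  have notV: "r (Suc k) \<notin> snd (st k)" for k using nxt_ok[OF inv[of k]] stS unfolding r_def by simp
  have "inj r"
  proof (rule injI)
    fix a b assume ab: "r a = r b"
    show "a = b"
    proof (rule ccontr)
      assume "a \<noteq> b"
      then consider "a < b" | "b < a" by linarith
      then show False
      proof cases
        case 1
        then have k: "b = Suc (b - 1)" "a \<le> b - 1" by auto
        define k where "k = b - 1"
        note k = k[folded k_def]
        then show False using inV[of a] mono[OF k(2)] notV[of k] ab by auto
      next
        case 2
        then have k: "a = Suc (a - 1)" "b \<le> a - 1" by auto
        define k where "k = a - 1"
        note k = k[folded k_def]
        then show False using inV[of b] mono[OF k(2)] notV[of k] ab by auto
      qed
    qed
  qed
  moreover have "range r \<subseteq> comp E S x" using inv unfolding r_def kinv_def by auto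
  ultimately show ?thesis using edge by (auto simp: is_ray_def)
qed

end

lemma range_inj_inf: "inj (f :: nat \<Rightarrow> 'b) \<Longrightarrow> infinite (range f)"
  using finite_imageD[of f UNIV] infinite_UNIV_nat by blast

context G
begin

lemma equiv_refl: assumes "is_ray E r" shows "equiv_rays E r r"
proof -
  have ir: "inj r" using assms by (simp add: is_ray_def)
  define P where "P = (\<lambda>n. [r n]) ` UNIV"
  have "inj (\<lambda>n. [r n])" using ir by (simp add: inj_def)
  then have "infinite P" unfolding P_def using range_inj_inf by blast
  moreover have "\<forall>p\<in>P. is_path E p \<and> hd p \<in> range r \<and> last p \<in> range r"
    unfolding P_def by (auto simp: is_path_def)
  moreover have "\<forall>p\<in>P. \<forall>q\<in>P. p \<noteq> q \<longrightarrow> set p \<inter> set q = {}"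
    unfolding P_def by auto
  ultimately show ?thesis unfolding equiv_rays_def by blast
qed

lemma equiv_sym: assumes "equiv_rays E r s" shows "equiv_rays E s r"
proof -
  obtain P where P: "infinite P" "\<forall>p\<in>P. is_path E p \<and> hd p \<in> range r \<and> last p \<in> range s"
    "\<forall>p\<in>P. \<forall>q\<in>P. p \<noteq> q \<longrightarrow> set p \<inter> set q = {}"
    using assms unfolding equiv_rays_def by blast
  have "infinite (rev ` P)" using P(1) finite_imageD[of rev P] by (auto simp: inj_on_def)
  moreover have "\<forall>p\<in>rev ` P. is_path E p \<and> hd p \<in> range s \<and> last p \<in> range r"
  proof
    fix p assume "p \<in> rev ` P"
    then obtain q where q: "q \<in> P" "p = rev q" by blast
    then have "is_path E q" "hd q \<in> range r" "last q \<in> range s" using P(2) by auto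
    then show "is_path E p \<and> hd p \<in> range s \<and> last p \<in> range r"
      using q chain_rev[of E q] sym by (auto simp: is_path_chain hd_rev last_rev)
  qed
  moreover have "\<forall>p\<in>rev ` P. \<forall>q\<in>rev ` P. p \<noteq> q \<longrightarrow> set p \<inter> set q = {}" using P(3) by auto
  ultimately show ?thesis unfolding equiv_rays_def by blast
qed

lemma sep_noneq:
  assumes S: "finite S" and r: "range r \<subseteq> comp E S x" and s: "range s \<subseteq> comp E S y"
    and ne: "comp E S x \<noteq> comp E S y"
  shows "\<not> equiv_rays E r s"
proof
  assume "equiv_rays E r s"
  then obtain P where P: "infinite P" "\<forall>p\<in>P. is_path E p \<and> hd p \<in> range r \<and> last p \<in> range s"
    "\<forall>p\<in>P. \<forall>q\<in>P. p \<noteq> q \<longrightarrow> set p \<inter> set q = {}"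
    unfolding equiv_rays_def by blast
  define Q where "Q = {p \<in> P. set p \<inter> S \<noteq> {}}"
  define sel where "sel p = (SOME v. v \<in> set p \<inter> S)" for p :: "'a list"
  have selin: "sel p \<in> set p \<inter> S" if "p \<in> Q" for p
  proof -
    have "\<exists>v. v \<in> set p \<inter> S" using that unfolding Q_def by blast
    then show ?thesis unfolding sel_def by (rule someI_ex)
  qed
  have "inj_on sel Q"
  proof (rule inj_onI)
    fix p q assume pq: "p \<in> Q" "q \<in> Q" "sel p = sel q"
    have "sel p \<in> set p" "sel p \<in> set q" using selin[OF pq(1)] selin[OF pq(2)] pq(3) by auto
    moreover have "p \<in> P" "q \<in> P" using pq unfolding Q_def by auto
    ultimately show "p = q" using P(3) by blast
  qed
  moreover have "sel ` Q \<subseteq> S" using selin by blast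
  ultimately have "finite Q" using S by (meson finite_imageD finite_subset)
  then have "infinite (P - Q)" using P(1) by simp
  then have "P - Q \<noteq> {}" by (metis finite.emptyI)
  then obtain p where p: "p \<in> P" "set p \<inter> S = {}" unfolding Q_def by blast
  have pp: "is_path E p" "hd p \<in> range r" "last p \<in> range s" using P(2) p(1) by auto
  have "(av E S)\<^sup>*\<^sup>* (hd p) (last p)" using path_walk pp(1) p(2) by (simp add: is_path_chain)
  then have "last p \<in> comp E S (hd p)" by (simp add: comp_def)
  moreover have "comp E S (hd p) = comp E S x" using comp_eq pp(2) r by blast
  moreover have "comp E S (last p) = comp E S y" using comp_eq pp(3) s by blast
  ultimately show False using ne comp_eq by metis
qed

lemma noneq_sep:
  assumes "\<not> equiv_rays E r1 r2"
  shows "\<exists>U. finite U \<and> (\<forall>p. is_path E p \<and> hd p \<in> range r1 \<and> last p \<in> range r2 \<longrightarrow> set p \<inter> U \<noteq> {})"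
proof (rule ccontr)
  assume "\<not> ?thesis"
  then have ex: "\<exists>p. is_path E p \<and> hd p \<in> range r1 \<and> last p \<in> range r2 \<and> set p \<inter> U = {}"
    if "finite U" for U using that by blast
  define gp where "gp U = (SOME p. is_path E p \<and> hd p \<in> range r1 \<and> last p \<in> range r2 \<and> set p \<inter> U = {})" for U
  have gp: "is_path E (gp U) \<and> hd (gp U) \<in> range r1 \<and> last (gp U) \<in> range r2 \<and> set (gp U) \<inter> U = {}"
    if "finite U" for U unfolding gp_def using someI_ex[OF ex[OF that]] .
  define Us where "Us = rec_nat {} (\<lambda>_ U. U \<union> set (gp U))"
  have Us0: "Us 0 = {}" and UsS: "Us (Suc n) = Us n \<union> set (gp (Us n))" for n unfolding Us_def by simp_all
  have finUs: "finite (Us n)" for n by (induction n) (simp_all add: Us0 UsS)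
  define ps where "ps n = gp (Us n)" for n
  have Usmono: "Us m \<subseteq> Us n" if "m \<le> n" for m n
    using that by (induction n) (auto simp: UsS le_Suc_eq)
  have disj: "set (ps m) \<inter> set (ps n) = {}" if "m < n" for m n
  proof -
    have "set (ps m) \<subseteq> Us n" using Usmono[of "Suc m" n] that unfolding ps_def UsS by auto
    then show ?thesis using gp[OF finUs[of n]] unfolding ps_def by blast
  qed
  have ne: "ps n \<noteq> []" for n using gp[OF finUs[of n]] unfolding ps_def by (simp add: is_path_def)
  have "inj ps"
  proof (rule injI)
    fix m n assume e: "ps m = ps n"
    show "m = n"
    proof (rule ccontr)
      assume "m \<noteq> n"
      then have "set (ps m) \<inter> set (ps n) = {}" using disj by (metis Int_commute nat_neq_iff)
      then show False using e ne[of m] by simp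
    qed
  qed
  then have "infinite (range ps)" using range_inj_inf by blast
  moreover have "\<forall>p\<in>range ps. is_path E p \<and> hd p \<in> range r1 \<and> last p \<in> range r2"
    using gp finUs unfolding ps_def by blast
  moreover have "\<forall>p\<in>range ps. \<forall>q\<in>range ps. p \<noteq> q \<longrightarrow> set p \<inter> set q = {}"
    using disj by (metis (no_types, opaque_lifting) Int_commute imageE nat_neq_iff)
  ultimately have "equiv_rays E r1 r2" unfolding equiv_rays_def by blast
  then show False using assms by simp
qed

abbreviation "RR \<equiv> {(r, s). is_ray E r \<and> is_ray E s \<and> equiv_rays E r s}"

lemma two_noneq:
  assumes "card (ends E) = 2"
  shows "\<exists>r1 r2. is_ray E r1 \<and> is_ray E r2 \<and> \<not> equiv_rays E r1 r2"
proof (rule ccontr)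
  assume "\<not> ?thesis"
  then have all: "is_ray E r \<Longrightarrow> is_ray E s \<Longrightarrow> equiv_rays E r s" for r s by blast
  have "ends E \<subseteq> {{r. is_ray E r}}"
  proof
    fix C assume "C \<in> ends E"
    then obtain x where x: "is_ray E x" "C = RR `` {x}" unfolding ends_def quotient_def by blast
    then have "C = {r. is_ray E r}" using all by auto
    then show "C \<in> {{r. is_ray E r}}" by simp
  qed
  then have "card (ends E) \<le> card {{r. is_ray E r}}" by (intro card_mono) simp_all
  then have "card (ends E) \<le> 1" by simp
  then show False using assms by simp
qed

lemma no_three:
  assumes "card (ends E) = 2"
    and r: "is_ray E r1" "is_ray E r2" "is_ray E r3"
    and n: "\<not> equiv_rays E r1 r2" "\<not> equiv_rays E r1 r3" "\<not> equiv_rays E r2 r3"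
  shows False
proof -
  have fin: "finite (ends E)" using assms(1) by (metis card.infinite zero_neq_numeral)
  define c where "c r = RR `` {r}" for r
  have cin: "c r \<in> ends E" if "is_ray E r" for r using that unfolding c_def ends_def quotient_def by blast
  have self: "r \<in> c r" if "is_ray E r" for r using that equiv_refl unfolding c_def by blast
  have notin: "r \<notin> c s" if "\<not> equiv_rays E r s" for r s using that equiv_sym unfolding c_def by blast
  have d12: "c r1 \<noteq> c r2" using self[OF r(1)] notin[OF n(1)] by blast
  have d13: "c r1 \<noteq> c r3" using self[OF r(1)] notin[OF n(2)] by blast
  have d23: "c r2 \<noteq> c r3" using self[OF r(2)] notin[OF n(3)] by blast
  have "{c r1, c r2, c r3} \<subseteq> ends E" using cin r by blast
  then have "card {c r1, c r2, c r3} \<le> card (ends E)" using fin card_mono by blast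
  moreover have "card {c r1, c r2, c r3} = 3" using d12 d13 d23 by simp
  ultimately show False using assms(1) by simp
qed

lemma E2:
  assumes "card (ends E) = 2" "finite S"
    and x: "x1 \<notin> S" "x2 \<notin> S" "x3 \<notin> S"
    and d: "comp E S x1 \<noteq> comp E S x2" "comp E S x1 \<noteq> comp E S x3" "comp E S x2 \<noteq> comp E S x3"
    and i: "infinite (comp E S x1)" "infinite (comp E S x2)" "infinite (comp E S x3)"
  shows False
proof -
  obtain r1 where r1: "is_ray E r1" "range r1 \<subseteq> comp E S x1" using koenig[OF x(1) i(1)] by blast
  obtain r2 where r2: "is_ray E r2" "range r2 \<subseteq> comp E S x2" using koenig[OF x(2) i(2)] by blast
  obtain r3 where r3: "is_ray E r3" "range r3 \<subseteq> comp E S x3" using koenig[OF x(3) i(3)] by blast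
  show False
    using no_three[OF assms(1) r1(1) r2(1) r3(1)]
      sep_noneq[OF assms(2) r1(2) r2(2) d(1)] sep_noneq[OF assms(2) r1(2) r3(2) d(2)]
      sep_noneq[OF assms(2) r2(2) r3(2) d(3)] by blast
qed

end

lemma pow_img_mono: "s ` X \<subseteq> X \<Longrightarrow> (s ^^ n) ` X \<subseteq> X"
  by (induction n) (auto simp: image_comp[symmetric])

lemma disj_pow:
  assumes b: "bij s" and KY: "K \<subseteq> s ` Y" and YY: "Y \<subseteq> s ` Y" and d: "K \<inter> Y = {}" and mn: "m < n"
  shows "(s ^^ m) ` K \<inter> (s ^^ n) ` K = {}"
proof -
  have step: "(s ^^ j) ` Y \<subseteq> (s ^^ Suc j) ` Y" for j
  proof -
    have "(s ^^ Suc j) ` Y = (s ^^ j) ` (s ` Y)" by (simp only: funpow_Suc_right image_comp)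
    then show ?thesis using YY by (simp add: image_mono)
  qed
  have mono: "(s ^^ i) ` Y \<subseteq> (s ^^ j) ` Y" if "i \<le> j" for i j
    using that
  proof (induction j)
    case 0 then show ?case by simp
  next
    case (Suc j) then show ?case using step[of j] by (auto simp: le_Suc_eq)
  qed
  have "(s ^^ m) ` K \<subseteq> (s ^^ m) ` (s ` Y)" using KY by (simp add: image_mono)
  also have "\<dots> = (s ^^ Suc m) ` Y" by (simp only: funpow_Suc_right image_comp)
  also have "\<dots> \<subseteq> (s ^^ n) ` Y" using mono[of "Suc m" n] mn by (simp only: Suc_le_eq)
  finally have 1: "(s ^^ m) ` K \<subseteq> (s ^^ n) ` Y" .
  have "inj (s ^^ n)" using b bij_is_inj inj_fn by blast
  then have "(s ^^ n) ` K \<inter> (s ^^ n) ` Y = {}" using d by (simp add: image_Int[symmetric])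
  then show ?thesis using 1 by blast
qed

context G
begin

definition ballto :: "'a set \<Rightarrow> nat \<Rightarrow> 'a set" where
  "ballto K N = {v. \<exists>k\<in>K. \<exists>m\<le>N. (E ^^ m) v k}"

lemma fin_walk_to: "finite {v. (E ^^ m) v k}"
proof (induction m arbitrary: k)
  case 0 then show ?case by simp
next
  case (Suc m)
  have "{v. (E ^^ Suc m) v k} \<subseteq> (\<Union>u\<in>{u. E u k}. {v. (E ^^ m) v u})"
    by (auto elim: relpowp_Suc_E)
  then show ?case using Suc fin_nb' by (meson finite_UN_I finite_subset)
qed

lemma fin_walk_from: "finite {w. (E ^^ m) v w}"
proof (induction m)
  case 0 then show ?case by simp
next
  case (Suc m)
  have "{w. (E ^^ Suc m) v w} \<subseteq> (\<Union>u\<in>{u. (E ^^ m) v u}. {w. E u w})"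
    by (auto elim: relpowp_Suc_E)
  then show ?case using Suc fin_nb by (meson finite_UN_I finite_subset)
qed

lemma fin_ballto: "finite K \<Longrightarrow> finite (ballto K N)"
proof -
  assume f: "finite K"
  have "ballto K N = (\<Union>k\<in>K. \<Union>m\<in>{..N}. {v. (E ^^ m) v k})" unfolding ballto_def by auto
  then show ?thesis using f fin_walk_to by simp
qed

lemma far:
  assumes z: "z \<notin> ballto K N" and w: "(E ^^ m) z w" and mN: "m \<le> N"
  shows "(av E K)\<^sup>*\<^sup>* z w"
  using w mN
proof (induction m arbitrary: w)
  case 0
  then show ?case by simp
next
  case (Suc m)
  then obtain u where u: "(E ^^ m) z u" "E u w" by (meson relpowp_Suc_E)
  have "u \<notin> K" using u(1) Suc.prems(2) z unfolding ballto_def by auto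
  moreover have "w \<notin> K"
  proof
    assume "w \<in> K"
    then have "z \<in> ballto K N" using Suc.prems unfolding ballto_def by blast
    then show False using z by simp
  qed
  ultimately have "av E K u w" using u(2) by (simp add: av_def)
  then show ?case using Suc.IH[OF u(1)] Suc.prems(2) by (meson Suc_leD rtranclp.rtrancl_into_rtrancl)
qed

lemma walk_bound:
  assumes "finite K"
  shows "\<exists>N. \<forall>k\<in>K. \<exists>m\<le>N. (E ^^ m) y k"
proof -
  define mk where "mk k = (SOME m. (E ^^ m) y k)" for k
  have mk: "(E ^^ mk k) y k" for k
  proof -
    have "\<exists>m. (E ^^ m) y k" using connE[of y k] by (simp add: rtranclp_power)
    then show ?thesis unfolding mk_def by (rule someI_ex)
  qed
  have "\<forall>k\<in>K. mk k \<le> Max (insert 0 (mk ` K))" using assms by simp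
  then show ?thesis using mk by blast
qed

lemma into_comp:
  assumes qt: "quasi_transitive E" and fK: "finite K" and a: "a \<notin> K"
    and inf: "infinite (comp E K a)"
  shows "\<exists>g\<in>automorphisms E. g ` K \<subseteq> comp E K a"
proof -
  define X where "X = comp E K a"
  define orb where "orb v = {f v | f. f \<in> automorphisms E}" for v
  have fo: "finite (orb ` UNIV)" using qt unfolding quasi_transitive_def finitely_many_orbits_def orb_def .
  have vin: "v \<in> orb v" for v
  proof -
    have "v = id v \<and> id \<in> automorphisms E" using aut_id by simp
    then show ?thesis unfolding orb_def by blast
  qed
  have "\<exists>y. infinite (orb y \<inter> X)"
  proof (rule ccontr)
    assume "\<not> ?thesis"
    then have "\<forall>Ob\<in>orb ` UNIV. finite (Ob \<inter> X)" by auto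
    then have "finite (\<Union>Ob\<in>orb ` UNIV. Ob \<inter> X)" using fo by blast
    moreover have "X \<subseteq> (\<Union>Ob\<in>orb ` UNIV. Ob \<inter> X)" using vin by blast
    ultimately show False using inf unfolding X_def using finite_subset by blast
  qed
  then obtain y where y: "infinite (orb y \<inter> X)" by blast
  obtain N where N: "\<forall>k\<in>K. \<exists>m\<le>N. (E ^^ m) y k" using walk_bound[OF fK] by blast
  have "infinite (orb y \<inter> X - ballto K N)" using y fin_ballto[OF fK, of N] by simp
  then obtain z where z: "z \<in> orb y" "z \<in> X" "z \<notin> ballto K N" by (metis Diff_iff IntD1 IntD2 finite.emptyI ex_in_conv)
  then obtain f where f: "f \<in> automorphisms E" "z = f y" unfolding orb_def by blast
  have "f ` K \<subseteq> X"
  proof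
    fix w assume "w \<in> f ` K"
    then obtain k where k: "k \<in> K" "w = f k" by blast
    then obtain m where m: "m \<le> N" "(E ^^ m) y k" using N by blast
    have "(E ^^ m) z w" using aut_relpow[OF f(1) m(2)] f k by simp
    then have "(av E K)\<^sup>*\<^sup>* z w" using far z(3) m(1) by blast
    then have "w \<in> comp E K z" by (simp add: comp_def)
    then show "w \<in> X" using comp_eq[of z K a] z(2) unfolding X_def by simp
  qed
  then show ?thesis using f unfolding X_def by blast
qed

lemma conn_side:
  assumes x0: "x0 \<in> K" and Kc: "\<forall>k\<in>K. conn_in E K k x0" and b: "b \<notin> K"
  shows "\<forall>T. T \<inter> (K \<union> comp E K b) = {} \<longrightarrow> K \<union> comp E K b \<subseteq> comp E T b"
proof (intro allI impI)
  fix T assume T: "T \<inter> (K \<union> comp E K b) = {}"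
  define X where "X = K \<union> comp E K b"
  obtain y' z where yz: "y' \<in> comp E K b" "E y' z" "z \<in> K" using exit_lemma[OF connE b x0] by blast
  have cb: "conn_in E X b w" if "w \<in> comp E K b" for w
    using comp_conn_in[OF b that] conn_in_mono unfolding X_def by blast
  have ck: "conn_in E X b k" if "k \<in> K" for k
  proof -
    have "conn_in E X b y'" using cb yz(1) .
    moreover have "conn_in E X y' z" using yz unfolding X_def by (intro conn_in_edge) auto
    moreover have "conn_in E X z x0" using Kc yz(3) conn_in_mono unfolding X_def by blast
    moreover have "conn_in E X x0 k" using Kc that conn_in_mono conn_in_sym unfolding X_def by blast
    ultimately show ?thesis using conn_in_trans by blast
  qed
  show "K \<union> comp E K b \<subseteq> comp E T b"
  proof
    fix w assume "w \<in> K \<union> comp E K b"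
    then have "conn_in E X b w" using cb ck by blast
    then show "w \<in> comp E T b" using conn_in_comp T unfolding X_def by (metis Int_commute)
  qed
qed

end

context G
begin

lemma relpow_sym: "(E ^^ m) u v \<Longrightarrow> (E ^^ m) v u"
proof (induction m arbitrary: v)
  case 0 then show ?case by simp
next
  case (Suc m)
  then obtain w where w: "(E ^^ m) u w" "E w v" by (meson relpowp_Suc_E)
  then show ?case using Suc.IH[OF w(1)] sym by (meson relpowp_Suc_I2)
qed

lemma ball_conn: "(E ^^ m) v x0 \<Longrightarrow> m \<le> N \<Longrightarrow> conn_in E (ballto {x0} N) v x0"
proof (induction m arbitrary: v)
  case 0 then show ?case by (simp add: conn_in_def)
next
  case (Suc m)
  then obtain u where u: "E v u" "(E ^^ m) u x0" by (meson relpowp_Suc_D2)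
  have "v \<in> ballto {x0} N" using Suc.prems unfolding ballto_def by blast
  moreover have "m \<le> N" using Suc.prems(2) by simp
  then have "u \<in> ballto {x0} N" using u(2) unfolding ballto_def by blast
  ultimately have "conn_in E (ballto {x0} N) v u" using u(1) conn_in_edge by blast
  then show ?case using Suc.IH[OF u(2)] Suc.prems(2) conn_in_trans by simp
qed

lemma tail_comp:
  assumes r: "is_ray E r" and t: "\<forall>m\<ge>n. r m \<notin> S"
  shows "m \<ge> n \<Longrightarrow> r m \<in> comp E S (r n)"
proof (induction m rule: dec_induct)
  case base then show ?case by (rule comp_self)
next
  case (step m)
  have "E (r m) (r (Suc m))" using r by (simp add: is_ray_def)
  then show ?case using comp_step[OF _ step(3)] t step(1) by simp
qed

lemma tail_exists:
  assumes r: "is_ray E r" and f: "finite S"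
  shows "\<exists>n. \<forall>m\<ge>n. r m \<notin> S"
proof -
  have "finite (r -` S)" using f r by (simp add: is_ray_def finite_vimageI)
  then obtain n where "\<forall>m\<in>r -` S. m < n" using finite_nat_set_iff_bounded by blast
  then show ?thesis by (meson leD vimageI)
qed

lemma tail_infinite:
  assumes r: "is_ray E r" and t: "\<forall>m\<ge>n. r m \<notin> S"
  shows "infinite (comp E S (r n))"
proof -
  have "r ` {n..} \<subseteq> comp E S (r n)" using tail_comp[OF r t] by auto
  moreover have "infinite (r ` {n..})"
    using r infinite_Ici[of n] finite_imageD[of r "{n..}"] by (auto simp: is_ray_def inj_on_def)
  ultimately show ?thesis using finite_subset by blast
qed

lemma two_sided:
  assumes ends2: "card (ends E) = 2"
  shows "\<exists>K a b. finite K \<and> K \<noteq> {} \<and> a \<notin> K \<and> b \<notin> K \<and> comp E K a \<noteq> comp E K b \<and>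
     infinite (comp E K a) \<and> infinite (comp E K b) \<and>
     (\<forall>v. v \<in> K \<or> v \<in> comp E K a \<or> v \<in> comp E K b) \<and>
     (\<forall>T. T \<inter> (K \<union> comp E K a) = {} \<longrightarrow> K \<union> comp E K a \<subseteq> comp E T a) \<and>
     (\<forall>T. T \<inter> (K \<union> comp E K b) = {} \<longrightarrow> K \<union> comp E K b \<subseteq> comp E T b)"
proof -
  obtain r1 r2 where r: "is_ray E r1" "is_ray E r2" "\<not> equiv_rays E r1 r2" using two_noneq[OF ends2] by blast
  obtain U where U: "finite U" "\<And>p. is_path E p \<Longrightarrow> hd p \<in> range r1 \<Longrightarrow> last p \<in> range r2 \<Longrightarrow> set p \<inter> U \<noteq> {}"
    using noneq_sep[OF r(3)] by blast
  define x0 where "x0 = r1 0"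
  obtain N where N: "\<forall>u\<in>U. \<exists>m\<le>N. (E ^^ m) x0 u" using walk_bound[OF U(1)] by blast
  define K1 where "K1 = ballto {x0} N"
  have fK1: "finite K1" unfolding K1_def by (simp add: fin_ballto)
  have x0K1: "x0 \<in> K1" unfolding K1_def ballto_def by force
  have UK1: "U \<subseteq> K1"
  proof
    fix u assume "u \<in> U"
    then obtain m where m: "m \<le> N" "(E ^^ m) x0 u" using N by blast
    have "(E ^^ m) u x0" using relpow_sym m(2) .
    then show "u \<in> K1" unfolding K1_def ballto_def using m(1) by blast
  qed
  have K1c: "\<forall>v\<in>K1. conn_in E K1 v x0"
  proof
    fix v assume "v \<in> K1"
    then obtain m where "m \<le> N" "(E ^^ m) v x0" unfolding K1_def ballto_def by blast
    then show "conn_in E K1 v x0" unfolding K1_def using ball_conn by blast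
  qed
  obtain n1 where n1: "\<forall>m\<ge>n1. r1 m \<notin> K1" using tail_exists[OF r(1) fK1] by blast
  obtain n2 where n2: "\<forall>m\<ge>n2. r2 m \<notin> K1" using tail_exists[OF r(2) fK1] by blast
  define a where "a = r1 n1"
  define b where "b = r2 n2"
  define C1 where "C1 = comp E K1 a"
  define C2 where "C2 = comp E K1 b"
  have aK1: "a \<notin> K1" and bK1: "b \<notin> K1" using n1 n2 unfolding a_def b_def by auto
  have iC1: "infinite C1" unfolding C1_def a_def using tail_infinite[OF r(1) n1] .
  have iC2: "infinite C2" unfolding C2_def b_def using tail_infinite[OF r(2) n2] .
  have C12: "C1 \<noteq> C2"
  proof
    assume "C1 = C2"
    then have "b \<in> comp E K1 a" using comp_self unfolding C1_def C2_def by metis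
    then have "(av E K1)\<^sup>*\<^sup>* a b" by (simp add: comp_def)
    then obtain p where p: "is_path E p" "hd p = a" "last p = b" "set p \<inter> K1 = {}"
      using walk_path bK1 by blast
    have "set p \<inter> U = {}" using p(4) UK1 by blast
    moreover have "hd p \<in> range r1" "last p \<in> range r2" using p unfolding a_def b_def by auto
    ultimately show False using U(2)[OF p(1)] by blast
  qed
  have other: "finite (comp E K1 x)" if "x \<notin> K1" "comp E K1 x \<noteq> C1" "comp E K1 x \<noteq> C2" for x
  proof (rule ccontr)
    assume "infinite (comp E K1 x)"
    then show False using E2[OF ends2 fK1 that(1) aK1 bK1] that iC1 iC2 C12 unfolding C1_def C2_def by blast
  qed
  define K where "K = - (C1 \<union> C2)"
  have C1K1: "C1 \<inter> K1 = {}" unfolding C1_def using comp_notin[OF aK1] by blast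
  have C2K1: "C2 \<inter> K1 = {}" unfolding C2_def using comp_notin[OF bK1] by blast
  have K1K: "K1 \<subseteq> K" unfolding K_def using C1K1 C2K1 by blast
  have Kout: "comp E K1 v \<noteq> C1 \<and> comp E K1 v \<noteq> C2" if "v \<in> K" for v
    using that comp_self[of v K1] unfolding K_def by auto
  have fK: "finite K"
  proof -
    have "K \<subseteq> K1 \<union> \<Union>(comp E K1 ` (- K1) - {C1, C2})"
    proof
      fix v assume v: "v \<in> K"
      show "v \<in> K1 \<union> \<Union>(comp E K1 ` (- K1) - {C1, C2})"
      proof (cases "v \<in> K1")
        case True then show ?thesis by simp
      next
        case False
        then have "comp E K1 v \<in> comp E K1 ` (- K1) - {C1, C2}" using Kout[OF v] by auto
        then show ?thesis using comp_self by blast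
      qed
    qed
    moreover have "finite (comp E K1 ` (- K1) - {C1, C2})"
      using finite_comps[OF fK1] x0K1 by blast
    moreover have "\<forall>C\<in>comp E K1 ` (- K1) - {C1, C2}. finite C" using other by blast
    ultimately show ?thesis using fK1 by (meson finite_Union finite_UnI finite_subset)
  qed
  have aK: "a \<notin> K" and bK: "b \<notin> K" using comp_self unfolding K_def C1_def C2_def by auto
  have KK1: "K = K1 \<union> (K - K1)" using K1K by blast
  have cA: "comp E K a = C1"
  proof
    show "comp E K a \<subseteq> C1" unfolding C1_def using comp_mono[OF K1K] .
    have "C1 \<inter> (K - K1) = {}" unfolding K_def by blast
    then have "comp E K1 a \<subseteq> comp E (K1 \<union> (K - K1)) a" using comp_sub[OF aK1] unfolding C1_def by blast
    then show "C1 \<subseteq> comp E K a" unfolding C1_def using KK1 by simp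
  qed
  have cB: "comp E K b = C2"
  proof
    show "comp E K b \<subseteq> C2" unfolding C2_def using comp_mono[OF K1K] .
    have "C2 \<inter> (K - K1) = {}" unfolding K_def by blast
    then have "comp E K1 b \<subseteq> comp E (K1 \<union> (K - K1)) b" using comp_sub[OF bK1] unfolding C2_def by blast
    then show "C2 \<subseteq> comp E K b" unfolding C2_def using KK1 by simp
  qed
  have Kc: "\<forall>k\<in>K. conn_in E K k x0"
  proof
    fix y assume y: "y \<in> K"
    show "conn_in E K y x0"
    proof (cases "y \<in> K1")
      case True then show ?thesis using K1c conn_in_mono K1K by blast
    next
      case False
      obtain y' z where yz: "y' \<in> comp E K1 y" "E y' z" "z \<in> K1"
        using exit_lemma[OF connE False x0K1] by blast
      have sub: "comp E K1 y \<subseteq> K"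
      proof -
        have "comp E K1 y \<inter> C1 = {}" using comp_disj Kout[OF y] unfolding C1_def by blast
        moreover have "comp E K1 y \<inter> C2 = {}" using comp_disj Kout[OF y] unfolding C2_def by blast
        ultimately show ?thesis unfolding K_def by blast
      qed
      have "conn_in E K y y'" using comp_conn_in[OF False yz(1)] sub conn_in_mono by blast
      moreover have "conn_in E K y' z" using yz sub K1K by (intro conn_in_edge) auto
      moreover have "conn_in E K z x0" using K1c yz(3) conn_in_mono K1K by blast
      ultimately show ?thesis using conn_in_trans by blast
    qed
  qed
  have x0K: "x0 \<in> K" using x0K1 K1K by blast
  show ?thesis
    apply (rule exI[of _ K], rule exI[of _ a], rule exI[of _ b])
    using fK x0K aK bK cA cB C12 iC1 iC2 conn_side[OF x0K Kc aK] conn_side[OF x0K Kc bK]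
    unfolding K_def by auto
qed

end

context G
begin

lemma fin_ballfrom: "finite {w. \<exists>i\<le>m. (E ^^ i) v w}"
proof -
  have "{w. \<exists>i\<le>m. (E ^^ i) v w} = (\<Union>i\<in>{..m}. {w. (E ^^ i) v w})" by auto
  then show ?thesis using fin_walk_from by simp
qed

lemma Lgen:
  assumes s: "s \<in> automorphisms E" and x: "x \<notin> K" and Kne: "K \<noteq> {}"
    and sX: "s ` comp E K x \<subseteq> comp E K x"
    and dj: "\<And>m n. m < n \<Longrightarrow> (s ^^ m) ` K \<inter> (s ^^ n) ` K = {}"
  shows "\<exists>n. v \<notin> (s ^^ n) ` comp E K x"
proof (rule ccontr)
  assume "\<not> ?thesis"
  then have allin: "v \<in> (s ^^ n) ` comp E K x" for n by blast
  obtain k0 where k0: "k0 \<in> K" using Kne by blast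
  obtain m where m: "(E ^^ m) v k0" using connE[of v k0] by (auto simp: rtranclp_power)
  define B where "B = {w. \<exists>i\<le>m. (E ^^ i) v w}"
  have fB: "finite B" unfolding B_def by (rule fin_ballfrom)
  have k0X: "k0 \<notin> comp E K x" using comp_notin[OF x] k0 by blast
  have ex: "\<exists>w. w \<in> B \<and> w \<in> (s ^^ n) ` K" for n
  proof -
    have sn: "s ^^ n \<in> automorphisms E" using aut_funpow[OF s] .
    have inj: "inj (s ^^ n)" using sn aut_bij bij_is_inj by blast
    have eq: "(s ^^ n) ` comp E K x = comp E ((s ^^ n) ` K) ((s ^^ n) x)" using comp_aut[OF sn] .
    have xn: "(s ^^ n) x \<notin> (s ^^ n) ` K" using x inj by (simp add: inj_image_mem_iff)
    have "k0 \<notin> (s ^^ n) ` comp E K x" using pow_img_mono[OF sX, of n] k0X by blast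
    then obtain i w where "i \<le> m" "w \<in> (s ^^ n) ` K" "(E ^^ i) v w"
      using boundary_walk[OF xn, of v m k0] allin[of n] m eq by auto
    then show ?thesis unfolding B_def by blast
  qed
  define ws where "ws n = (SOME w. w \<in> B \<and> w \<in> (s ^^ n) ` K)" for n
  have ws: "ws n \<in> B \<and> ws n \<in> (s ^^ n) ` K" for n unfolding ws_def using someI_ex[OF ex] .
  have "inj ws"
  proof (rule injI)
    fix a b assume e: "ws a = ws b"
    show "a = b"
    proof (rule ccontr)
      assume "a \<noteq> b"
      then consider "a < b" | "b < a" by linarith
      then show False
      proof cases
        case 1
        have "ws a \<in> (s ^^ a) ` K \<inter> (s ^^ b) ` K" using ws[of a] ws[of b] e by simp
        then show False using dj[OF 1] by simp
      next
        case 2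
        have "ws a \<in> (s ^^ b) ` K \<inter> (s ^^ a) ` K" using ws[of a] ws[of b] e by simp
        then show False using dj[OF 2] by simp
      qed
    qed
  qed
  moreover have "range ws \<subseteq> B" using ws by blast
  ultimately show False using fB range_inj_inf finite_subset by blast
qed

lemma tlemma:
  assumes ends2: "card (ends E) = 2"
    and fK: "finite K" and Kne: "K \<noteq> {}" and x: "x \<notin> K" and y: "y \<notin> K"
    and XY: "comp E K x \<noteq> comp E K y"
    and infX: "infinite (comp E K x)" and infY: "infinite (comp E K y)"
    and part: "\<forall>v. v \<in> K \<or> v \<in> comp E K x \<or> v \<in> comp E K y"
    and connY: "\<forall>T. T \<inter> (K \<union> comp E K y) = {} \<longrightarrow> K \<union> comp E K y \<subseteq> comp E T y"
    and t: "t \<in> automorphisms E" and tX: "t ` comp E K x \<subseteq> comp E K x" and tK: "t ` K \<subseteq> comp E K x"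
  shows "\<exists>t h. t \<in> automorphisms E \<and> (\<forall>v. h (t v) = h v + 1) \<and> finite {v. h v = (0::int)}"
proof -
  define X where "X = comp E K x"
  define Y where "Y = comp E K y"
  have XYd: "X \<inter> Y = {}" using comp_disj XY unfolding X_def Y_def by blast
  have KX: "K \<inter> X = {}" "K \<inter> Y = {}" using comp_notin x y unfolding X_def Y_def by blast+
  have xX: "x \<in> X" and yY: "y \<in> Y" unfolding X_def Y_def by (simp_all add: comp_self)
  have tb: "bij t" using t aut_bij by blast
  have ti: "inj t" using tb bij_is_inj by blast
  have tXc: "t ` X = comp E (t ` K) (t x)" unfolding X_def using comp_aut[OF t] .
  have tYc: "t ` Y = comp E (t ` K) (t y)" unfolding Y_def using comp_aut[OF t] .
  have tpart: "v \<in> t ` K \<or> v \<in> t ` X \<or> v \<in> t ` Y" for v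
  proof -
    have "v = t (inv t v)" using tb by (simp add: bij_is_surj surj_f_inv_f)
    then show ?thesis using part[rule_format, of "inv t v"] unfolding X_def Y_def by (metis imageI)
  qed
  have tXY: "t ` X \<inter> t ` Y = {}" using XYd ti by (simp add: image_Int[symmetric])
  have KYt: "K \<union> Y \<subseteq> t ` Y"
  proof -
    have "t ` K \<inter> (K \<union> Y) = {}" using tK KX XYd unfolding X_def Y_def by blast
    then have 1: "K \<union> Y \<subseteq> comp E (t ` K) y" using connY unfolding Y_def by blast
    have "y \<notin> t ` K" using tK yY XYd unfolding X_def by blast
    moreover have "y \<notin> t ` X" using tX yY XYd unfolding X_def by blast
    ultimately have "y \<in> t ` Y" using tpart by blast
    then have "comp E (t ` K) y = t ` Y" using tYc comp_eq by simp
    then show ?thesis using 1 by simp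
  qed
  have djt: "(t ^^ m) ` K \<inter> (t ^^ n) ` K = {}" if "m < n" for m n
    using disj_pow[OF tb _ _ KX(2) that] KYt by blast
  have up: "\<exists>n. v \<notin> (t ^^ n) ` X" for v
    using Lgen[OF t x Kne tX[folded X_def, unfolded X_def] djt] unfolding X_def by blast
  define s where "s = inv t"
  have s: "s \<in> automorphisms E" unfolding s_def using aut_inv[OF t] .
  have sb: "bij s" using s aut_bij by blast
  have sinv: "s (t w) = w" for w unfolding s_def using ti by simp
  have sY: "s ` Y \<subseteq> Y"
  proof
    fix w assume "w \<in> s ` Y"
    then obtain u where u: "u \<in> Y" "w = s u" by blast
    then obtain u' where "u' \<in> Y" "u = t u'" using KYt by blast
    then show "w \<in> Y" using u sinv by simp
  qed
  have XsX: "X \<subseteq> s ` X" using tX sinv unfolding X_def by (metis image_eqI subset_iff)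
  have KsX: "K \<subseteq> s ` X" using tK sinv unfolding X_def by (metis image_eqI subset_iff)
  have djs: "(s ^^ m) ` K \<inter> (s ^^ n) ` K = {}" if "m < n" for m n
    using disj_pow[OF sb KsX XsX KX(1) that] .
  have low0: "\<exists>n. v \<notin> (s ^^ n) ` Y" for v
    using Lgen[OF s y Kne sY[unfolded Y_def] djs] unfolding Y_def by blast
  define M where "M n v \<longleftrightarrow> v \<in> tpow t n ` X" for n v
  have tpow_sub: "tpow t j ` X \<subseteq> X" if "0 \<le> j" for j
    using that pow_img_mono[OF tX[folded X_def]] by (simp add: tpow_def)
  have down: "M n v" if "n \<le> m" "M m v" for n m v
  proof -
    have "tpow t m = tpow t n \<circ> tpow t (m - n)" using tpow_add[OF tb, of n "m - n"] by simp
    then have "tpow t m ` X = tpow t n ` (tpow t (m - n) ` X)" by (simp add: image_comp)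
    also have "\<dots> \<subseteq> tpow t n ` X" using tpow_sub[of "m - n"] that(1) by (intro image_mono) simp
    finally have "tpow t m ` X \<subseteq> tpow t n ` X" .
    then show ?thesis using that(2) unfolding M_def by blast
  qed
  have hi: "\<exists>n. \<not> M n v" for v using up[of v] unfolding M_def by (metis tpow_nat)
  have lo: "\<exists>n. M n v" for v
  proof -
    obtain n1 where n1: "v \<notin> (s ^^ n1) ` Y" using low0 by blast
    have "bij (s ^^ n1)" using sb bij_betw_funpow by blast
    then obtain w where w: "v = (s ^^ n1) w" by (metis bij_pointE)
    then have "w \<notin> Y" using n1 by blast
    then have "w \<in> K \<or> w \<in> X" using part unfolding X_def Y_def by blast
    then have "w \<in> s ` X" using KsX XsX by blast
    then have "v \<in> (s ^^ n1) ` (s ` X)" using w by blast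
    also have "\<dots> = (s ^^ Suc n1) ` X" by (simp only: funpow_Suc_right image_comp)
    finally have "v \<in> tpow t (- int (Suc n1)) ` X" unfolding s_def by (simp only: tpow_neg_nat)
    then show ?thesis unfolding M_def by blast
  qed
  have exh: "\<exists>n. M n v \<and> \<not> M (n + 1) v" for v
  proof -
    obtain l where l: "M l v" using lo by blast
    obtain u where u: "\<not> M u v" using hi by blast
    have lu: "l < u" using l u down by (meson not_le order.strict_implies_order)
    define Z where "Z = {n. l \<le> n \<and> n \<le> u \<and> M n v}"
    have fZ: "finite Z" unfolding Z_def by (rule finite_subset[of _ "{l..u}"]) auto
    have lZ: "l \<in> Z" unfolding Z_def using l lu by simp
    define n where "n = Max Z"
    have nZ: "n \<in> Z" unfolding n_def using fZ lZ Max_in by blast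
    have nmax: "k \<le> n" if "k \<in> Z" for k unfolding n_def using fZ that by simp
    have "\<not> M (n + 1) v"
    proof
      assume a: "M (n + 1) v"
      have "n \<noteq> u" using nZ u unfolding Z_def by blast
      then have "n + 1 \<in> Z" using nZ a unfolding Z_def by auto
      then show False using nmax by fastforce
    qed
    then show ?thesis using nZ unfolding Z_def by blast
  qed
  have uniq: "n = n'" if "M n v" "\<not> M (n + 1) v" "M n' v" "\<not> M (n' + 1) v" for n n' v
  proof (rule ccontr)
    assume "n \<noteq> n'"
    then consider "n + 1 \<le> n'" | "n' + 1 \<le> n" by linarith
    then show False using that down by cases blast+
  qed
  define h where "h v = (THE n. M n v \<and> \<not> M (n + 1) v)" for v
  have hchar: "M (h v) v \<and> \<not> M (h v + 1) v" for v
  proof -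
    have "\<exists>!n. M n v \<and> \<not> M (n + 1) v" using exh uniq by blast
    then show ?thesis unfolding h_def by (rule theI')
  qed
  have heq: "h v = n" if "M n v" "\<not> M (n + 1) v" for n v
    using hchar[of v] that uniq by blast
  have Mt: "M (n + 1) (t v) \<longleftrightarrow> M n v" for n v
  proof -
    have "tpow t (n + 1) ` X = t ` (tpow t n ` X)" using tpow_plus1[OF tb, of n] by (simp add: image_comp)
    then show ?thesis unfolding M_def using ti by (simp add: inj_image_mem_iff)
  qed
  have hstep: "h (t v) = h v + 1" for v
  proof -
    have "M (h v + 1) (t v)" using Mt hchar by blast
    moreover have "\<not> M (h v + 1 + 1) (t v)" using Mt hchar by blast
    ultimately show ?thesis by (rule heq)
  qed
  have lev: "{v. h v = 0} \<subseteq> X - t ` X"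
  proof
    fix v assume "v \<in> {v. h v = 0}"
    then have "M 0 v" "\<not> M 1 v" using hchar[of v] by auto
    moreover have "tpow t 1 = t" using tpow_nat[of t 1] by simp
    ultimately show "v \<in> X - t ` X" unfolding M_def by simp
  qed
  have sub2: "X - t ` X \<subseteq> t ` K \<union> (X \<inter> t ` Y)" using tpart by blast
  have finXtY: "finite (X \<inter> t ` Y)"
  proof (rule ccontr)
    assume inf: "infinite (X \<inter> t ` Y)"
    define S where "S = K \<union> t ` K"
    have fS: "finite S" unfolding S_def using fK by simp
    have Sne: "S \<noteq> {}" unfolding S_def using Kne by simp
    have notS: "X \<inter> t ` Y \<subseteq> - S"
    proof -
      have "t ` Y \<inter> t ` K = {}" using KX(2) ti by (simp add: image_Int[symmetric] Int_commute)
      then show ?thesis using KX(1) unfolding S_def by blast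
    qed
    have "X \<inter> t ` Y \<subseteq> \<Union>(comp E S ` (X \<inter> t ` Y))" using comp_self by blast
    moreover have "finite (comp E S ` (X \<inter> t ` Y))"
      using finite_comps[OF fS Sne] notS by (meson finite_subset image_mono)
    ultimately have "\<exists>z\<in>X \<inter> t ` Y. infinite (comp E S z)"
    proof -
      assume a1: "X \<inter> t ` Y \<subseteq> \<Union>(comp E S ` (X \<inter> t ` Y))" and a2: "finite (comp E S ` (X \<inter> t ` Y))"
      show ?thesis
      proof (rule ccontr)
        assume "\<not> ?thesis"
        then have "\<forall>C\<in>comp E S ` (X \<inter> t ` Y). finite C" by blast
        then have "finite (\<Union>(comp E S ` (X \<inter> t ` Y)))" using a2 by (intro finite_Union) auto
        then show False using a1 inf finite_subset by blast
      qed
    qed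
    then obtain z where z: "z \<in> X \<inter> t ` Y" "infinite (comp E S z)" by blast
    have zS: "z \<notin> S" using z(1) notS by blast
    have czX: "comp E S z \<subseteq> X"
      using comp_mono[of K S z] comp_eq[of z K x] z(1) unfolding S_def X_def by auto
    have czY: "comp E S z \<subseteq> t ` Y"
    proof -
      have "comp E S z \<subseteq> comp E (t ` K) z" using comp_mono[of "t ` K" S z] unfolding S_def by blast
      moreover have "comp E (t ` K) z = t ` Y" using comp_eq z(1) tYc by auto
      ultimately show ?thesis by simp
    qed
    have ytK: "y \<notin> t ` K" using tK yY XYd unfolding X_def by blast
    have yS: "y \<notin> S" using y ytK unfolding S_def by blast
    have "Y \<inter> t ` K = {}" using ytK tK XYd unfolding X_def by blast
    then have YS: "Y \<subseteq> comp E S y" using comp_sub[OF y] unfolding S_def Y_def by blast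
    have txS: "t x \<notin> S"
    proof -
      have "t x \<notin> t ` K" using x ti by (simp add: inj_image_mem_iff)
      moreover have "t x \<in> X" using tX xX unfolding X_def by blast
      ultimately show ?thesis using KX(1) unfolding S_def by blast
    qed
    have txK: "t x \<notin> t ` K" using x ti by (simp add: inj_image_mem_iff)
    have "comp E (t ` K) (t x) \<inter> K = {}" using tXc[symmetric] tX KX(1) unfolding X_def by blast
    then have tXS: "t ` X \<subseteq> comp E S (t x)" using comp_sub[OF txK] tXc unfolding S_def
      by (simp add: Un_commute)
    have infY': "infinite (comp E S y)" using YS infY finite_subset unfolding Y_def by blast
    have infX': "infinite (comp E S (t x))"
    proof -
      have "infinite (t ` X)" using infX ti finite_imageD unfolding X_def by (metis inj_on_subset subset_UNIV)
      then show ?thesis using tXS finite_subset by blast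
    qed
    have d1: "comp E S z \<noteq> comp E S y" using comp_self[of y S] czX yY XYd by blast
    have d2: "comp E S z \<noteq> comp E S (t x)"
    proof -
      have "t x \<in> t ` X" using xX by blast
      then have "t x \<notin> t ` Y" using tXY by blast
      then show ?thesis using comp_self[of "t x" S] czY by blast
    qed
    have d3: "comp E S y \<noteq> comp E S (t x)"
    proof -
      have "comp E S y \<subseteq> Y" using comp_mono[of K S y] unfolding S_def Y_def by blast
      moreover have "t x \<in> X" using tX xX unfolding X_def by blast
      ultimately show ?thesis using comp_self[of "t x" S] XYd by blast
    qed
    show False using E2[OF ends2 fS zS yS txS d1 d2 d3 z(2) infY' infX'] .
  qed
  have "finite {v. h v = 0}"
    using lev sub2 finXtY fK by (meson finite_UnI finite_imageI finite_subset)
  then show ?thesis using t hstep by blast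
qed

lemma case_lemma:
  assumes K: "a \<notin> K" "b \<notin> K" and AB: "comp E K a \<noteq> comp E K b"
    and part: "\<forall>v. v \<in> K \<or> v \<in> comp E K a \<or> v \<in> comp E K b"
    and connB: "\<forall>T. T \<inter> (K \<union> comp E K b) = {} \<longrightarrow> K \<union> comp E K b \<subseteq> comp E T b"
    and g: "g \<in> automorphisms E" and gK: "g ` K \<subseteq> comp E K a"
  shows "g ` comp E K a \<subseteq> comp E K a \<or> g ` comp E K b \<subseteq> comp E K a"
proof -
  define A where "A = comp E K a"
  define B where "B = comp E K b"
  have ABd: "A \<inter> B = {}" using comp_disj AB unfolding A_def B_def by blast
  have KA: "K \<inter> A = {}" "K \<inter> B = {}" using comp_notin K unfolding A_def B_def by blast+
  have gi: "inj g" using g aut_bij bij_is_inj by blast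
  have gb: "bij g" using g aut_bij by blast
  have gA: "g ` A = comp E (g ` K) (g a)" unfolding A_def using comp_aut[OF g] .
  have gB: "g ` B = comp E (g ` K) (g b)" unfolding B_def using comp_aut[OF g] .
  have gAB: "g ` A \<inter> g ` B = {}" using ABd gi by (simp add: image_Int[symmetric])
  have gpart: "v \<in> g ` K \<or> v \<in> g ` A \<or> v \<in> g ` B" for v
  proof -
    have "v = g (inv g v)" using gb by (simp add: bij_is_surj surj_f_inv_f)
    then show ?thesis using part[rule_format, of "inv g v"] unfolding A_def B_def by (metis imageI)
  qed
  have "g ` K \<inter> (K \<union> B) = {}" using gK KA ABd unfolding A_def by blast
  then have KB: "K \<union> B \<subseteq> comp E (g ` K) b" using connB unfolding B_def by blast
  have bB: "b \<in> B" unfolding B_def by (rule comp_self)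
  have "b \<notin> g ` K" using gK bB ABd unfolding A_def by blast
  then consider "b \<in> g ` B" | "b \<in> g ` A" using gpart by blast
  then show ?thesis
  proof cases
    case 1
    then have "comp E (g ` K) b = g ` B" using gB comp_eq by simp
    then have "g ` A \<inter> (K \<union> B) = {}" using KB gAB by blast
    then have "g ` A \<subseteq> A" using part unfolding A_def B_def by blast
    then show ?thesis unfolding A_def by simp
  next
    case 2
    then have "comp E (g ` K) b = g ` A" using gA comp_eq by simp
    then have "g ` B \<inter> (K \<union> B) = {}" using KB gAB by blast
    then have "g ` B \<subseteq> A" using part unfolding A_def B_def by blast
    then show ?thesis unfolding A_def B_def by simp
  qed
qed

theorem main_G:
  assumes qt: "quasi_transitive E" and ends2: "card (ends E) = 2"
  shows "\<exists>t h. t \<in> automorphisms E \<and> (\<forall>v. h (t v) = h v + 1) \<and> finite {v. h v = (0::int)}"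
proof -
  obtain K a b where s: "finite K" "K \<noteq> {}" "a \<notin> K" "b \<notin> K" "comp E K a \<noteq> comp E K b"
     "infinite (comp E K a)" "infinite (comp E K b)"
     "\<forall>v. v \<in> K \<or> v \<in> comp E K a \<or> v \<in> comp E K b"
     "\<forall>T. T \<inter> (K \<union> comp E K a) = {} \<longrightarrow> K \<union> comp E K a \<subseteq> comp E T a"
     "\<forall>T. T \<inter> (K \<union> comp E K b) = {} \<longrightarrow> K \<union> comp E K b \<subseteq> comp E T b"
    using two_sided[OF ends2] by (elim exE conjE) (rule that, assumption+)
  have part': "\<forall>v. v \<in> K \<or> v \<in> comp E K b \<or> v \<in> comp E K a" using s(8) by blast
  obtain g where g: "g \<in> automorphisms E" "g ` K \<subseteq> comp E K a" using into_comp[OF qt s(1) s(3) s(6)] by blast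
  obtain g' where g': "g' \<in> automorphisms E" "g' ` K \<subseteq> comp E K b" using into_comp[OF qt s(1) s(4) s(7)] by blast
  have c1: "g ` comp E K a \<subseteq> comp E K a \<or> g ` comp E K b \<subseteq> comp E K a"
    using case_lemma[OF s(3) s(4) s(5) s(8) s(10) g] .
  have c2: "g' ` comp E K b \<subseteq> comp E K b \<or> g' ` comp E K a \<subseteq> comp E K b"
    using case_lemma[OF s(4) s(3) s(5)[symmetric] part' s(9) g'] .
  show ?thesis
  proof (cases "g ` comp E K a \<subseteq> comp E K a")
    case True
    show ?thesis using tlemma[OF ends2 s(1-7) s(8) s(10) g(1) True g(2)] .
  next
    case F1: False
    show ?thesis
    proof (cases "g' ` comp E K b \<subseteq> comp E K b")
      case True
      show ?thesis using tlemma[OF ends2 s(1) s(2) s(4) s(3) s(5)[symmetric] s(7) s(6) part' s(9) g'(1) True g'(2)] .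
    next
      case False
      have gB: "g ` comp E K b \<subseteq> comp E K a" using c1 F1 by blast
      have gA: "g' ` comp E K a \<subseteq> comp E K b" using c2 False by blast
      have t: "g \<circ> g' \<in> automorphisms E" using aut_comp g(1) g'(1) by blast
      have tA: "(g \<circ> g') ` comp E K a \<subseteq> comp E K a" using gA gB by (auto simp: image_comp[symmetric])
      have tK: "(g \<circ> g') ` K \<subseteq> comp E K a" using g'(2) gB by (auto simp: image_comp[symmetric])
      show ?thesis using tlemma[OF ends2 s(1-7) s(8) s(10) t tA tK] .
    qed
  qed
qed

end

theorem theorem5p4:
  fixes E :: "'a \<Rightarrow> 'a \<Rightarrow> bool"
  assumes "simple_graph E"
    and "connected_graph E"
    and "locally_finite E"
    and "quasi_transitive E"
    and "card (ends E) = 2"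
  shows "\<exists>c. proper_coloring E c \<and> range c \<subseteq> {..<chromatic_number E} \<and> periodic_coloring E c"
proof -
  interpret G E using assms by (simp add: G_def)
  obtain t h where th: "t \<in> automorphisms E" "\<forall>v. h (t v) = h v + 1" "finite {v. h v = (0::int)}"
    using main_G[OF assms(4) assms(5)] by blast
  interpret shift E t h using assms th by (simp add: shift_def)
  show ?thesis by (rule periodic_main)
qed

end
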